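(* Let $L$ be a finite-dimensional Lie algebra over a field $F$. Then $L$ is supersolvable if and only if $\eta(L:M)=1$ for all maximal subalgebras $M$ of $L$.
   Context: $L$ is supersolvable if there is a chain $0=L_0\subset L_1\subset\cdots\subset L_n=L$ of ideals of $L$ with $\dim(L_{i}/L_{i-1})=1$ for all $i$. For a nonzero subalgebra $X$ of $L$, the strict core $k(X)$ is the sum of all ideals of $L$ that are proper subalgebras of $X$ (it is $0$ if there are none). For a maximal subalgebra $M$, a subalgebra $C$ is a completion of $M$ if $C\not\subseteq M$ but every proper subalgebra of $C$ that is an ideal of $L$ is contained in $M$; an ideal completion is a completion that is an ideal of $L$. The ideal index $\eta(L:M)$ is $\dim(C/k(C))$ for any ideal completion $C$ of $M$ (independent of the choice of $C$). *)

theory Defs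
  imports Complex_Main
begin

text \<open>A Lie algebra over a field: the whole type 'b is the underlying vector space
  (scalar multiplication scale over the field 'a), with Lie bracket br.\<close>

definition lie_algebra :: "('a::field \<Rightarrow> 'b::ab_group_add \<Rightarrow> 'b) \<Rightarrow> ('b \<Rightarrow> 'b \<Rightarrow> 'b) \<Rightarrow> bool" where
  "lie_algebra scale br \<longleftrightarrow>
     vector_space scale \<and>
     (\<forall>x y z. br (x + y) z = br x z + br y z) \<and>
     (\<forall>x y z. br x (y + z) = br x y + br x z) \<and>
     (\<forall>a x y. br (scale a x) y = scale a (br x y)) \<and>
     (\<forall>a x y. br x (scale a y) = scale a (br x y)) \<and>
     (\<forall>x. br x x = 0) \<and>
     (\<forall>x y z. br x (br y z) + br y (br z x) + br z (br x y) = 0)"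

definition fin_dim :: "('a::field \<Rightarrow> 'b::ab_group_add \<Rightarrow> 'b) \<Rightarrow> bool" where
  "fin_dim scale \<longleftrightarrow> (\<exists>B. finite B \<and> module.span scale B = UNIV)"

definition lie_subalgebra :: "('a::field \<Rightarrow> 'b::ab_group_add \<Rightarrow> 'b) \<Rightarrow> ('b \<Rightarrow> 'b \<Rightarrow> 'b) \<Rightarrow> 'b set \<Rightarrow> bool" where
  "lie_subalgebra scale br S \<longleftrightarrow> module.subspace scale S \<and> (\<forall>x\<in>S. \<forall>y\<in>S. br x y \<in> S)"

definition lie_ideal :: "('a::field \<Rightarrow> 'b::ab_group_add \<Rightarrow> 'b) \<Rightarrow> ('b \<Rightarrow> 'b \<Rightarrow> 'b) \<Rightarrow> 'b set \<Rightarrow> bool" where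
  "lie_ideal scale br I \<longleftrightarrow> module.subspace scale I \<and> (\<forall>x. \<forall>y\<in>I. br x y \<in> I)"

definition maximal_subalgebra :: "('a::field \<Rightarrow> 'b::ab_group_add \<Rightarrow> 'b) \<Rightarrow> ('b \<Rightarrow> 'b \<Rightarrow> 'b) \<Rightarrow> 'b set \<Rightarrow> bool" where
  "maximal_subalgebra scale br M \<longleftrightarrow>
     lie_subalgebra scale br M \<and> M \<noteq> UNIV \<and>
     (\<forall>S. lie_subalgebra scale br S \<and> M \<subseteq> S \<longrightarrow> S = M \<or> S = UNIV)"

text \<open>Supersolvable: a chain 0 = L_0 \<subset> ... \<subset> L_n = L of ideals with dim(L_i/L_{i-1}) = 1,
  the quotient dimension written as the difference of dimensions.\<close>
definition supersolvable :: "('a::field \<Rightarrow> 'b::ab_group_add \<Rightarrow> 'b) \<Rightarrow> ('b \<Rightarrow> 'b \<Rightarrow> 'b) \<Rightarrow> bool" where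
  "supersolvable scale br \<longleftrightarrow>
     (\<exists>n Ls. Ls 0 = {0} \<and> Ls n = UNIV \<and>
        (\<forall>i\<le>n. lie_ideal scale br (Ls i)) \<and>
        (\<forall>i<n. Ls i \<subseteq> Ls (Suc i) \<and>
               vector_space.dim scale (Ls (Suc i)) = vector_space.dim scale (Ls i) + 1))"

definition strict_core :: "('a::field \<Rightarrow> 'b::ab_group_add \<Rightarrow> 'b) \<Rightarrow> ('b \<Rightarrow> 'b \<Rightarrow> 'b) \<Rightarrow> 'b set \<Rightarrow> 'b set" where
  "strict_core scale br X =
     module.span scale (\<Union>{I. lie_ideal scale br I \<and> lie_subalgebra scale br I \<and> I \<subset> X})"

definition completion :: "('a::field \<Rightarrow> 'b::ab_group_add \<Rightarrow> 'b) \<Rightarrow> ('b \<Rightarrow> 'b \<Rightarrow> 'b) \<Rightarrow> 'b set \<Rightarrow> 'b set \<Rightarrow> bool" where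
  "completion scale br M C \<longleftrightarrow>
     lie_subalgebra scale br C \<and> \<not> C \<subseteq> M \<and>
     (\<forall>I. lie_subalgebra scale br I \<and> I \<subset> C \<and> lie_ideal scale br I \<longrightarrow> I \<subseteq> M)"

definition ideal_completion :: "('a::field \<Rightarrow> 'b::ab_group_add \<Rightarrow> 'b) \<Rightarrow> ('b \<Rightarrow> 'b \<Rightarrow> 'b) \<Rightarrow> 'b set \<Rightarrow> 'b set \<Rightarrow> bool" where
  "ideal_completion scale br M C \<longleftrightarrow> completion scale br M C \<and> lie_ideal scale br C"

text \<open>Ideal index eta(L:M) = dim(C / k(C)) for an (any) ideal completion C of M.\<close>
definition ideal_index :: "('a::field \<Rightarrow> 'b::ab_group_add \<Rightarrow> 'b) \<Rightarrow> ('b \<Rightarrow> 'b \<Rightarrow> 'b) \<Rightarrow> 'b set \<Rightarrow> nat" where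
  "ideal_index scale br M =
     (SOME d. \<exists>C. ideal_completion scale br M C \<and>
        d = vector_space.dim scale C - vector_space.dim scale (strict_core scale br C))"

end

theory Submission imports Defs
begin



definition ssum :: "'b::ab_group_add set \<Rightarrow> 'b set \<Rightarrow> 'b set" where
  "ssum A B = {x + y |x y. x \<in> A \<and> y \<in> B}"

locale lie_fd =
  fixes scale :: "'a::field \<Rightarrow> 'b::ab_group_add \<Rightarrow> 'b" and br :: "'b \<Rightarrow> 'b \<Rightarrow> 'b"
  assumes la: "lie_algebra scale br" and fd: "fin_dim scale"
begin

sublocale vector_space scale using la unfolding lie_algebra_def by auto

definition Bas where "Bas = (SOME B. independent B \<and> span B = UNIV \<and> finite B)"

lemma Bas_ex: "\<exists>B. independent B \<and> span B = UNIV \<and> finite B"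
proof -
  obtain B0 where B0: "finite B0" "span B0 = UNIV" using fd unfolding fin_dim_def by auto
  obtain B where B: "independent B" "UNIV \<subseteq> span B" using basis_exists[of UNIV] by metis
  have "finite B" using independent_span_bound[OF B0(1)] B0(2) B(1) by auto
  then show ?thesis using B by auto
qed

sublocale fd: finite_dimensional_vector_space scale Bas
  using someI_ex[OF Bas_ex] unfolding Bas_def by unfold_locales auto

lemma br_addL: "br (x + y) z = br x z + br y z" using la unfolding lie_algebra_def by auto
lemma br_addR: "br x (y + z) = br x y + br x z" using la unfolding lie_algebra_def by auto
lemma br_scaleL: "br (scale a x) y = scale a (br x y)" using la unfolding lie_algebra_def by auto
lemma br_scaleR: "br x (scale a y) = scale a (br x y)" using la unfolding lie_algebra_def by auto
lemma br_self: "br x x = 0" using la unfolding lie_algebra_def by auto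
lemma jac0: "br x (br y z) + br y (br z x) + br z (br x y) = 0" using la unfolding lie_algebra_def by auto

lemma br_0L[simp]: "br 0 y = 0" using br_addL[of 0 0 y] by simp
lemma br_0R[simp]: "br x 0 = 0" using br_addR[of x 0 0] by simp
lemma br_negL: "br (- x) y = - br x y"
proof -
  have "br (- x) y + br x y = 0" using br_addL[of "-x" x y] by simp
  then show ?thesis by (rule eq_neg_iff_add_eq_0[THEN iffD2])
qed
lemma br_negR: "br x (- y) = - br x y"
proof -
  have "br x (- y) + br x y = 0" using br_addR[of x "-y" y] by simp
  then show ?thesis by (rule eq_neg_iff_add_eq_0[THEN iffD2])
qed
lemma br_diffL: "br (x - y) z = br x z - br y z"
  unfolding diff_conv_add_uminus by (simp only: br_addL br_negL)
lemma br_diffR: "br x (y - z) = br x y - br x z"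
  unfolding diff_conv_add_uminus by (simp only: br_addR br_negR)
lemma skew: "br x y = - br y x"
proof -
  have e: "0 = br x x + br x y + (br y x + br y y)" using br_self[of "x+y"] by (simp add: br_addL br_addR add_ac)
  then have "br x y + br y x = 0" by (simp add: br_self)
  then show ?thesis by (simp add: eq_neg_iff_add_eq_0)
qed
lemma jac: "br x (br y z) = br (br x y) z + br y (br x z)"
proof -
  have h1: "br y (br z x) = - br y (br x z)" by (subst skew[of z x]) (rule br_negR)
  have h2: "br z (br x y) = - br (br x y) z" by (rule skew)
  have "br x (br y z) + (br y (br z x) + br z (br x y)) = 0" using jac0[of x y z]
    by (simp add: add.assoc)
  then have "br x (br y z) = - (br y (br z x) + br z (br x y))"
    by (rule eq_neg_iff_add_eq_0[THEN iffD2])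
  then show ?thesis by (simp add: h1 h2 add.commute)
qed

abbreviation "subalg S \<equiv> lie_subalgebra scale br S"
abbreviation "ideal I \<equiv> lie_ideal scale br I"

lemma ideal_sub: "ideal I \<Longrightarrow> subspace I" by (simp add: lie_ideal_def)
lemma ideal_br: "ideal I \<Longrightarrow> y \<in> I \<Longrightarrow> br x y \<in> I" by (simp add: lie_ideal_def)
lemma ideal_brL: "ideal I \<Longrightarrow> y \<in> I \<Longrightarrow> br y x \<in> I"
  by (subst skew) (rule subspace_neg[OF ideal_sub ideal_br])
lemma ideal_subalg: "ideal I \<Longrightarrow> subalg I" by (simp add: lie_ideal_def lie_subalgebra_def)
lemma subalg_sub: "subalg I \<Longrightarrow> subspace I" by (simp add: lie_subalgebra_def)
lemma subalg_br: "subalg I \<Longrightarrow> x \<in> I \<Longrightarrow> y \<in> I \<Longrightarrow> br x y \<in> I" by (simp add: lie_subalgebra_def)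
lemma ideal_UNIV: "ideal UNIV" by (simp add: lie_ideal_def)
lemma ideal_0: "ideal {0}" by (simp add: lie_ideal_def)
lemma ideal_Int: "ideal I \<Longrightarrow> ideal J \<Longrightarrow> ideal (I \<inter> J)"
  by (simp add: lie_ideal_def subspace_inter)
lemma subalg_Int: "subalg I \<Longrightarrow> subalg J \<Longrightarrow> subalg (I \<inter> J)"
  by (simp add: lie_subalgebra_def subspace_inter)

lemma subspace_ssum: "subspace A \<Longrightarrow> subspace B \<Longrightarrow> subspace (ssum A B)"
  unfolding ssum_def by (rule subspace_sums)

lemma ssum_I: "x \<in> A \<Longrightarrow> y \<in> B \<Longrightarrow> x + y \<in> ssum A B" unfolding ssum_def by auto
lemma ssum_E: "z \<in> ssum A B \<Longrightarrow> (\<And>x y. x \<in> A \<Longrightarrow> y \<in> B \<Longrightarrow> z = x + y \<Longrightarrow> P) \<Longrightarrow> P"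
  unfolding ssum_def by auto
lemma ssum_sup1: "subspace B \<Longrightarrow> A \<subseteq> ssum A B"
  using ssum_I[of _ A 0 B] subspace_0 by fastforce
lemma ssum_sup2: "subspace A \<Longrightarrow> B \<subseteq> ssum A B"
  using ssum_I[of 0 A _ B] subspace_0 by fastforce
lemma ssum_least: "A \<subseteq> C \<Longrightarrow> B \<subseteq> C \<Longrightarrow> subspace C \<Longrightarrow> ssum A B \<subseteq> C"
  unfolding ssum_def using subspace_add by blast
lemma ssum_comm: "ssum A B = ssum B A" apply (auto simp: ssum_def) by (metis add.commute)+
lemma ssum_mono: "A \<subseteq> A' \<Longrightarrow> B \<subseteq> B' \<Longrightarrow> ssum A B \<subseteq> ssum A' B'"
  unfolding ssum_def by blast

lemma ideal_ssum: assumes "ideal I" "ideal J" shows "ideal (ssum I J)"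
  unfolding lie_ideal_def
proof (intro conjI allI ballI)
  show "subspace (ssum I J)" using assms by (simp add: ideal_sub subspace_ssum)
  fix x y assume "y \<in> ssum I J"
  then obtain a b where "a \<in> I" "b \<in> J" "y = a + b" by (auto elim: ssum_E)
  then show "br x y \<in> ssum I J" using assms by (auto simp: br_addR ideal_br intro: ssum_I)
qed

lemma subalg_ssum: assumes "subalg S" "ideal J" shows "subalg (ssum S J)"
  unfolding lie_subalgebra_def
proof (intro conjI allI ballI)
  show "subspace (ssum S J)" using assms by (simp add: ideal_sub subalg_sub subspace_ssum)
  fix x y assume "x \<in> ssum S J" "y \<in> ssum S J"
  then obtain a b c d where "a \<in> S" "b \<in> J" "x = a + b" "c \<in> S" "d \<in> J" "y = c + d" by (auto elim!: ssum_E)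
  then have "br x y = br a c + (br a d + br b c + br b d)"
    by (simp add: br_addL br_addR algebra_simps)
  moreover have "br a d + br b c + br b d \<in> J"
    using \<open>b \<in> J\<close> \<open>d \<in> J\<close> assms(2) by (meson ideal_br ideal_brL ideal_sub subspace_add)
  ultimately show "br x y \<in> ssum S J" using assms \<open>a \<in> S\<close> \<open>c \<in> S\<close> by (auto intro: ssum_I subalg_br)
qed

lemma dim_ssum: "subspace A \<Longrightarrow> subspace B \<Longrightarrow> dim (ssum A B) + dim (A \<inter> B) = dim A + dim B"
  unfolding ssum_def by (rule fd.dim_sums_Int)

lemma sub_eq_dim: "subspace A \<Longrightarrow> subspace B \<Longrightarrow> A \<subseteq> B \<Longrightarrow> dim B \<le> dim A \<Longrightarrow> A = B"
  by (rule fd.subspace_dim_equal)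

lemma dim_lt: assumes "subspace A" "subspace B" "A \<subset> B" shows "dim A < dim B"
proof -
  have hA: "span A = A" and hB: "span B = B" using assms(1,2) by simp_all
  from assms(3) have "span A \<subset> span B" by (simp only: hA hB)
  then show ?thesis by (rule fd.dim_psubset)
qed

lemma dim_le: "A \<subseteq> B \<Longrightarrow> dim A \<le> dim B" by (rule fd.dim_subset)

lemma br_span:
  assumes "\<And>a b. a \<in> A \<Longrightarrow> b \<in> B \<Longrightarrow> br a b \<in> C" "subspace C" "x \<in> span A" "y \<in> span B"
  shows "br x y \<in> C"
proof -
  have base: "\<forall>y\<in>span B. br a y \<in> C" if "a \<in> A" for a
  proof
    fix y assume "y \<in> span B"
    then show "br a y \<in> C"
    proof (induction rule: span_induct)
      case base show ?case using assms(2) 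
        by (auto simp: subspace_def br_addR br_scaleR)
    next case (step y) then show ?case using assms(1) that by auto qed
  qed
  have sub: "subspace {x. \<forall>y\<in>span B. br x y \<in> C}" using assms(2)
    by (auto simp: subspace_def br_addL br_scaleL)
  have "\<forall>y\<in>span B. br x y \<in> C"
    by (rule span_induct[OF assms(3) sub]) (rule base)
  then show ?thesis using assms(4) by blast
qed

lemma ideal_span_Union: assumes "\<And>I. I \<in> F \<Longrightarrow> ideal I" shows "ideal (span (\<Union>F))"
  unfolding lie_ideal_def
proof (intro conjI allI ballI)
  show "subspace (span (\<Union>F))" by simp
  fix x y assume y: "y \<in> span (\<Union>F)"
  have sub: "subspace {y. br x y \<in> span (\<Union>F)}"
    by (auto simp: subspace_def br_addR br_scaleR span_add span_scale span_zero)
  have gen: "br x b \<in> span (\<Union>F)" if "b \<in> \<Union>F" for b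
  proof -
    from that obtain I where "I \<in> F" "b \<in> I" by blast
    then have "br x b \<in> I" using assms ideal_br by blast
    then show "br x b \<in> span (\<Union>F)" using \<open>I \<in> F\<close> span_base by blast
  qed
  show "br x y \<in> span (\<Union>F)"
    by (rule span_induct[OF y sub]) (rule gen)
qed

end



context lie_fd begin

definition lin :: "('b \<Rightarrow> 'b) \<Rightarrow> bool" where
  "lin T \<longleftrightarrow> (\<forall>x y. T (x + y) = T x + T y) \<and> (\<forall>a x. T (scale a x) = scale a (T x))"

lemma lin_add: "lin T \<Longrightarrow> T (x + y) = T x + T y" by (simp add: lin_def)
lemma lin_scale: "lin T \<Longrightarrow> T (scale a x) = scale a (T x)" by (simp add: lin_def)
lemma lin_0: "lin T \<Longrightarrow> T 0 = 0" using lin_add[of T 0 0] by simp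
lemma lin_neg: "lin T \<Longrightarrow> T (- x) = - T x"
proof -
  assume l: "lin T"
  have "T (- x) + T x = 0" using lin_add[OF l, of "-x" x] lin_0[OF l] by simp
  then show ?thesis by (rule eq_neg_iff_add_eq_0[THEN iffD2])
qed
lemma lin_diff: "lin T \<Longrightarrow> T (x - y) = T x - T y"
proof -
  assume l: "lin T"
  have "T (x + - y) = T x + - T y" by (simp only: lin_add[OF l] lin_neg[OF l])
  then show ?thesis by simp
qed
lemma pow_swap: "(T ^^ n) (T x) = T ((T ^^ n) x)" by (rule funpow_swap1[symmetric])
lemma pow_pow: "(T ^^ a) ((T ^^ b) x) = (T ^^ (a + b)) x" by (simp add: funpow_add)
lemma lin_id: "lin (\<lambda>x. x)" by (simp add: lin_def)
lemma lin_comp: "lin T \<Longrightarrow> lin S \<Longrightarrow> lin (T \<circ> S)" by (simp add: lin_def)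
lemma lin_pow: "lin T \<Longrightarrow> lin (T ^^ n)"
  by (induction n) (auto simp: lin_def)

lemma sub_image: assumes "lin T" "subspace U" shows "subspace (T ` U)"
  unfolding subspace_def
proof (intro conjI ballI allI)
  show "0 \<in> T ` U" using assms lin_0 subspace_0 by (metis image_eqI)
  fix x y assume "x \<in> T ` U" "y \<in> T ` U"
  then obtain a b where "a \<in> U" "b \<in> U" "x = T a" "y = T b" by auto
  then show "x + y \<in> T ` U" using assms by (metis image_eqI lin_add subspace_add)
next
  fix c x assume "x \<in> T ` U"
  then obtain a where "a \<in> U" "x = T a" by auto
  then show "scale c x \<in> T ` U" using assms by (metis image_eqI lin_scale subspace_scale)
qed

lemma pow_maps: "(\<And>u. u \<in> U \<Longrightarrow> T u \<in> U) \<Longrightarrow> u \<in> U \<Longrightarrow> (T ^^ n) u \<in> U"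
  by (induction n) auto

lemma fit:
  assumes l: "lin T" and U: "subspace U" and K: "subspace K" and KU: "K \<subseteq> U"
    and TU: "\<And>u. u \<in> U \<Longrightarrow> T u \<in> U" and TK: "\<And>u. u \<in> K \<Longrightarrow> T u \<in> K"
  shows "\<exists>N. \<forall>u\<in>U. \<exists>u'\<in>U. (T ^^ N) u - (T ^^ Suc N) u' \<in> K"
proof -
  define I where "I n = ssum ((T ^^ n) ` U) K" for n
  have subI: "subspace (I n)" for n unfolding I_def
    by (rule subspace_ssum[OF sub_image[OF lin_pow[OF l] U] K])
  have IU: "I n \<subseteq> U" for n unfolding I_def
    by (rule ssum_least) (use KU U TU pow_maps[of U T] in auto)
  have dec: "I (Suc n) \<subseteq> I n" for n
  proof -
    have "(T ^^ Suc n) ` U \<subseteq> (T ^^ n) ` U"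
    proof
      fix x assume "x \<in> (T ^^ Suc n) ` U"
      then obtain u where "u \<in> U" "x = (T ^^ n) (T u)" by (auto simp: pow_swap)
      then show "x \<in> (T ^^ n) ` U" using TU by auto
    qed
    then show ?thesis unfolding I_def by (rule ssum_mono) simp
  qed
  have "\<exists>N. I N = I (Suc N)"
  proof (rule ccontr)
    assume "\<not> ?thesis"
    then have ne: "I (Suc n) \<noteq> I n" for n by metis
    have "dim (I n) + n \<le> dim U" for n
    proof (induction n)
      case 0 then show ?case using dim_le[OF IU[of 0]] by simp
    next
      case (Suc n)
      have "I (Suc n) \<subset> I n" using dec[of n] ne[of n] by (rule psubsetI)
      then have "dim (I (Suc n)) < dim (I n)"
        by (rule dim_lt[OF subI subI])
      then show ?case using Suc by simp
    qed
    from this[of "Suc (dim U)"] show False by simp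
  qed
  then obtain N where N: "I N = I (Suc N)" ..
  show ?thesis
  proof (intro exI ballI)
    fix u assume "u \<in> U"
    then have "(T ^^ N) u \<in> (T ^^ N) ` U" by simp
    then have "(T ^^ N) u \<in> I N" unfolding I_def using ssum_sup1[OF K, of "(T ^^ N) ` U"] by blast
    then have "(T ^^ N) u \<in> I (Suc N)" using N by simp
    then obtain u' k where "u' \<in> U" "k \<in> K" "(T ^^ N) u = (T ^^ Suc N) u' + k"
      unfolding I_def by (auto elim!: ssum_E)
    then show "\<exists>u'\<in>U. (T ^^ N) u - (T ^^ Suc N) u' \<in> K" by (metis add_diff_cancel_left')
  qed
qed

lemma pow_K: "(\<And>u. u \<in> K \<Longrightarrow> T u \<in> K) \<Longrightarrow> u \<in> K \<Longrightarrow> (T ^^ n) u \<in> K"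
  by (induction n) auto

lemma fit2:
  assumes l: "lin T" and U: "subspace U" and K: "subspace K" and KU: "K \<subseteq> U"
    and TU: "\<And>u. u \<in> U \<Longrightarrow> T u \<in> U" and TK: "\<And>u. u \<in> K \<Longrightarrow> T u \<in> K"
  shows "\<exists>N. \<forall>k. \<forall>u\<in>U. \<exists>u'\<in>U. (T ^^ N) u - (T ^^ (N + k)) u' \<in> K"
proof -
  obtain N where N: "\<forall>u\<in>U. \<exists>u'\<in>U. (T ^^ N) u - (T ^^ Suc N) u' \<in> K"
    using fit[OF assms] by blast
  have "\<forall>u\<in>U. \<exists>u'\<in>U. (T ^^ N) u - (T ^^ (N + k)) u' \<in> K" for k
  proof (induction k)
    case 0 then show ?case using K subspace_0 by (metis add_0_right diff_self)
  next
    case (Suc k)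
    show ?case
    proof
      fix u assume "u \<in> U"
      with Suc obtain u' where u': "u' \<in> U" "(T ^^ N) u - (T ^^ (N + k)) u' \<in> K" by blast
      with N obtain u'' where u'': "u'' \<in> U" "(T ^^ N) u' - (T ^^ Suc N) u'' \<in> K" by blast
      have "(T ^^ k) ((T ^^ N) u' - (T ^^ Suc N) u'') \<in> K" using pow_K[of K T] TK u''(2) by blast
      moreover have "(T ^^ k) ((T ^^ N) u') = (T ^^ (N + k)) u'" by (simp add: pow_pow add.commute)
      moreover have "(T ^^ k) ((T ^^ Suc N) u'') = (T ^^ (N + Suc k)) u''" by (simp only: pow_pow) (simp add: add.commute)
      ultimately have "(T ^^ (N + k)) u' - (T ^^ (N + Suc k)) u'' \<in> K"
        using lin_diff[OF lin_pow[OF l, of k]] by metis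
      then have "((T ^^ N) u - (T ^^ (N + k)) u') + ((T ^^ (N + k)) u' - (T ^^ (N + Suc k)) u'') \<in> K"
        using u'(2) subspace_add[OF K] by blast
      then show "\<exists>u'\<in>U. (T ^^ N) u - (T ^^ (N + Suc k)) u' \<in> K" using u''(1) by auto
    qed
  qed
  then show ?thesis by blast
qed

lemma inj_pow:
  assumes inj: "\<And>u. u \<in> U \<Longrightarrow> T u \<in> K \<Longrightarrow> u \<in> K" and TU: "\<And>u. u \<in> U \<Longrightarrow> T u \<in> U"
  shows "u \<in> U \<Longrightarrow> (T ^^ n) u \<in> K \<Longrightarrow> u \<in> K"
proof (induction n arbitrary: u)
  case 0 then show ?case by simp
next
  case (Suc n)
  then have "(T ^^ n) (T u) \<in> K" by (simp only: pow_swap funpow.simps o_apply)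
  then have "T u \<in> K" using Suc TU by blast
  then show ?case using inj Suc by blast
qed

lemma surj_mod:
  assumes l: "lin T" and U: "subspace U" and K: "subspace K" and KU: "K \<subseteq> U"
    and TU: "\<And>u. u \<in> U \<Longrightarrow> T u \<in> U" and TK: "\<And>u. u \<in> K \<Longrightarrow> T u \<in> K"
    and inj: "\<And>u. u \<in> U \<Longrightarrow> T u \<in> K \<Longrightarrow> u \<in> K"
    and u: "u \<in> U"
  shows "\<exists>u'\<in>U. u - T u' \<in> K"
proof -
  obtain N where N: "\<forall>u\<in>U. \<exists>u'\<in>U. (T ^^ N) u - (T ^^ Suc N) u' \<in> K"
    using fit[OF l U K KU TU TK] by blast
  then obtain u' where u': "u' \<in> U" "(T ^^ N) u - (T ^^ Suc N) u' \<in> K" using u by blast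
  have "(T ^^ N) (u - T u') \<in> K"
    using u'(2) lin_diff[OF lin_pow[OF l, of N]] by (simp add: pow_swap)
  moreover have "u - T u' \<in> U" using u u' TU U subspace_diff by blast
  ultimately have "u - T u' \<in> K" using inj_pow[of U T K, OF inj TU] by blast
  then show ?thesis using u' by blast
qed

end



context lie_fd begin

abbreviation "kc C \<equiv> strict_core scale br C"
abbreviation "maxs M \<equiv> maximal_subalgebra scale br M"
abbreviation "ic M C \<equiv> ideal_completion scale br M C"

lemma kc_ideal: "ideal (kc C)"
  unfolding strict_core_def by (rule ideal_span_Union) auto

lemma kc_sub: "subspace C \<Longrightarrow> kc C \<subseteq> C"
proof -
  assume "subspace C"
  have "\<Union>{I. ideal I \<and> subalg I \<and> I \<subset> C} \<subseteq> C"
    apply (rule Union_least) apply (elim CollectE conjE) apply (erule psubset_imp_subset) done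
  then show ?thesis unfolding strict_core_def using \<open>subspace C\<close> by (rule span_minimal)
qed

lemma kc_ge: assumes "ideal I" "I \<subset> C" shows "I \<subseteq> kc C"
proof -
  have "I \<in> {I. ideal I \<and> subalg I \<and> I \<subset> C}" using assms ideal_subalg by simp
  then have "I \<subseteq> \<Union>{I. ideal I \<and> subalg I \<and> I \<subset> C}" by (rule Union_upper)
  then show ?thesis unfolding strict_core_def using span_superset by (rule subset_trans)
qed

lemma ic_ideal: "ic M C \<Longrightarrow> ideal C" by (simp add: ideal_completion_def)
lemma ic_notin: "ic M C \<Longrightarrow> \<not> C \<subseteq> M" by (simp add: ideal_completion_def completion_def)
lemma ic_min: "ic M C \<Longrightarrow> ideal I \<Longrightarrow> I \<subset> C \<Longrightarrow> I \<subseteq> M"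
  using ideal_subalg by (simp add: ideal_completion_def completion_def)

lemma maxs_subalg: "maxs M \<Longrightarrow> subalg M" by (simp add: maximal_subalgebra_def)
lemma maxs_sub: "maxs M \<Longrightarrow> subspace M" by (simp add: maximal_subalgebra_def lie_subalgebra_def)
lemma maxs_ne: "maxs M \<Longrightarrow> M \<noteq> UNIV" by (simp add: maximal_subalgebra_def)
lemma maxs_max: "maxs M \<Longrightarrow> subalg S \<Longrightarrow> M \<subseteq> S \<Longrightarrow> S = M \<or> S = UNIV"
  by (simp add: maximal_subalgebra_def)

lemma kc_M: assumes "maxs M" "ic M C" shows "kc C \<subseteq> M"
  unfolding strict_core_def
  by (rule span_minimal) (use assms ic_min maxs_sub in auto)

lemma kc_psub: assumes "maxs M" "ic M C" shows "kc C \<subset> C"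
  using kc_M[OF assms] kc_sub[OF ideal_sub[OF ic_ideal[OF assms(2)]]] ic_notin[OF assms(2)] by blast

lemma min_dim: "P X \<Longrightarrow> \<exists>Y. P Y \<and> (\<forall>Z. P Z \<longrightarrow> dim Y \<le> dim Z)"
  by (rule ex_has_least_nat)

lemma max_dim: assumes "P X" shows "\<exists>Y. P Y \<and> (\<forall>Z. P Z \<longrightarrow> dim Z \<le> dim Y)"
proof -
  obtain Y where "P Y" "\<forall>Z. P Z \<longrightarrow> fd.dimension - dim Y \<le> fd.dimension - dim Z"
    using ex_has_least_nat[of P X "\<lambda>Y. fd.dimension - dim Y"] assms by blast
  then show ?thesis using fd.dim_subset_UNIV by (metis diff_le_mono2 diff_diff_cancel)
qed

lemma max_ssum: assumes "maxs M" "ideal C" "\<not> C \<subseteq> M" shows "ssum M C = UNIV"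
proof -
  have "subalg (ssum M C)" using assms by (simp add: subalg_ssum maxs_subalg)
  moreover have "M \<subseteq> ssum M C" by (rule ssum_sup1[OF ideal_sub[OF assms(2)]])
  moreover have "C \<subseteq> ssum M C" by (rule ssum_sup2[OF maxs_sub[OF assms(1)]])
  ultimately show ?thesis using maxs_max[OF assms(1)] assms(3) by blast
qed

lemma ic_exists: assumes "maxs M" shows "\<exists>C. ic M C"
proof -
  have "ideal UNIV \<and> \<not> UNIV \<subseteq> M" using ideal_UNIV maxs_ne[OF assms] by auto
  then obtain C where C: "ideal C \<and> \<not> C \<subseteq> M" and mn: "\<forall>Z. ideal Z \<and> \<not> Z \<subseteq> M \<longrightarrow> dim C \<le> dim Z"
    using min_dim[of "\<lambda>I. ideal I \<and> \<not> I \<subseteq> M"] by blast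
  have "ic M C" unfolding ideal_completion_def completion_def
  proof (intro conjI allI impI)
    show "subalg C" "ideal C" using C ideal_subalg by auto
    show "\<not> C \<subseteq> M" using C by auto
    fix I assume I: "subalg I \<and> I \<subset> C \<and> ideal I"
    then have "dim I < dim C" using dim_lt ideal_sub C by blast
    then show "I \<subseteq> M" using mn I by (meson not_le)
  qed
  then show ?thesis by blast
qed

lemma max_exists: assumes "subalg S" "S \<noteq> UNIV" shows "\<exists>M. maxs M \<and> S \<subseteq> M"
proof -
  obtain M where M: "subalg M \<and> S \<subseteq> M \<and> M \<noteq> UNIV"
    and mx: "\<forall>Z. subalg Z \<and> S \<subseteq> Z \<and> Z \<noteq> UNIV \<longrightarrow> dim Z \<le> dim M"
    using max_dim[of "\<lambda>Z. subalg Z \<and> S \<subseteq> Z \<and> Z \<noteq> UNIV" S] assms by blast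
  have "maxs M" unfolding maximal_subalgebra_def
  proof (intro conjI allI impI)
    fix Z assume Z: "subalg Z \<and> M \<subseteq> Z"
    show "Z = M \<or> Z = UNIV"
    proof (cases "Z = UNIV")
      case False
      then have "dim Z \<le> dim M" using mx Z M by blast
      then have "M = Z" using sub_eq_dim[of M Z] Z M subalg_sub by blast
      then show ?thesis by simp
    qed simp
  qed (use M in auto)
  then show ?thesis using M by blast
qed

lemma ic_X:
  assumes M: "maxs M" and C: "ic M C" and X: "ideal X" "X \<subseteq> M" "kc C \<subseteq> X"
  shows "C \<inter> X = kc C" and "dim (ssum C X) + dim (kc C) = dim C + dim X"
    and "\<And>Z. ideal Z \<Longrightarrow> X \<subseteq> Z \<Longrightarrow> Z \<subseteq> ssum C X \<Longrightarrow> Z = X \<or> Z = ssum C X"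
proof -
  have iC: "ideal C" using ic_ideal[OF C] .
  have "C \<inter> X \<subseteq> kc C"
  proof (rule kc_ge)
    show "ideal (C \<inter> X)" using iC X ideal_Int by blast
    show "C \<inter> X \<subset> C" using ic_notin[OF C] X by blast
  qed
  moreover have "kc C \<subseteq> C \<inter> X" using kc_sub[OF ideal_sub[OF iC]] X by blast
  ultimately show CX: "C \<inter> X = kc C" by blast
  show "dim (ssum C X) + dim (kc C) = dim C + dim X"
    using dim_ssum[OF ideal_sub[OF iC] ideal_sub[OF X(1)]] CX by simp
  fix Z assume Z: "ideal Z" "X \<subseteq> Z" "Z \<subseteq> ssum C X"
  show "Z = X \<or> Z = ssum C X"
  proof (cases "C \<subseteq> Z")
    case True
    then have "ssum C X \<subseteq> Z" using Z by (simp add: ssum_least ideal_sub)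
    then show ?thesis using Z by blast
  next
    case False
    then have "Z \<inter> C \<subset> C" by blast
    then have ZC: "Z \<inter> C \<subseteq> X" using kc_ge[of "Z \<inter> C" C] ideal_Int[OF Z(1) iC] X(3) by blast
    have "Z \<subseteq> X"
    proof
      fix z assume "z \<in> Z"
      then obtain c x where cx: "c \<in> C" "x \<in> X" "z = c + x" using Z(3) by (auto elim!: ssum_E)
      then have "c = z - x" by simp
      then have "c \<in> Z" using \<open>z \<in> Z\<close> cx(2) Z(2) subspace_diff[OF ideal_sub[OF Z(1)]] by blast
      then have "c \<in> X" using ZC cx(1) by blast
      then show "z \<in> X" using cx subspace_add[OF ideal_sub[OF X(1)]] by blast
    qed
    then show ?thesis using Z by blast
  qed
qed

lemma codim_lemma:
  assumes M: "maxs M" and C1: "ic M C1" and C2: "ic M C2" and X: "ideal X" "X \<subseteq> M" "kc C1 \<subseteq> X"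
    and Y: "ssum C1 X \<inter> ssum C2 X \<subseteq> X"
  shows "dim (UNIV::'b set) + dim X = dim M + dim (ssum C1 X)"
proof -
  have iC1: "ideal C1" and iC2: "ideal C2" using C1 C2 ic_ideal by auto
  have sX: "subspace X" using X ideal_sub by auto
  define P where "P = M \<inter> ssum C1 X"
  have iS: "ideal (ssum C1 X)" using iC1 X by (simp add: ideal_ssum)
  have UMC: "ssum M C2 = UNIV" using max_ssum[OF M iC2 ic_notin[OF C2]] .
  have "ideal P" unfolding lie_ideal_def
  proof (intro conjI allI ballI)
    show "subspace P" unfolding P_def using maxs_sub[OF M] ideal_sub[OF iS] by (simp add: subspace_inter)
    fix y z assume z: "z \<in> P"
    have "y \<in> ssum M C2" using UMC by simp
    then obtain m c where mc: "m \<in> M" "c \<in> C2" "y = m + c" by (auto elim!: ssum_E)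
    have "br m z \<in> M" using subalg_br[OF maxs_subalg[OF M] mc(1)] z P_def by blast
    moreover have "br m z \<in> ssum C1 X" using ideal_br[OF iS] z P_def by blast
    moreover have "br c z \<in> C2" using ideal_brL[OF iC2 mc(2)] .
    moreover have "br c z \<in> ssum C1 X" using ideal_br[OF iS] z P_def by blast
    moreover have "C2 \<subseteq> ssum C2 X" using ssum_sup1[OF sX] .
    ultimately have "br m z \<in> P" "br c z \<in> P" using Y X(2) unfolding P_def by blast+
    then show "br y z \<in> P" using mc(3) br_addL \<open>subspace P\<close> subspace_add by metis
  qed
  moreover have "X \<subseteq> P" unfolding P_def using X(2) ssum_sup2[OF ideal_sub[OF iC1]] by blast
  moreover have "P \<subseteq> ssum C1 X" unfolding P_def by blast
  ultimately have "P = X \<or> P = ssum C1 X" using ic_X(3)[OF M C1 X] by blast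
  moreover have "P \<noteq> ssum C1 X"
    using ic_notin[OF C1] ssum_sup1[OF sX, of C1] unfolding P_def by blast
  ultimately have PX: "P = X" by blast
  have "ssum M (ssum C1 X) = UNIV"
    using max_ssum[OF M iS] ic_notin[OF C1] ssum_sup1[OF sX, of C1] by blast
  then show ?thesis using dim_ssum[OF maxs_sub[OF M] ideal_sub[OF iS]] PX P_def by simp
qed

lemma indep:
  assumes M: "maxs M" and C1: "ic M C1" and C2: "ic M C2"
  shows "dim C1 - dim (kc C1) = dim C2 - dim (kc C2)"
proof (cases "C1 \<inter> C2 \<subseteq> M")
  case False
  have iC1: "ideal C1" and iC2: "ideal C2" using C1 C2 ic_ideal by auto
  have "\<not> C1 \<inter> C2 \<subset> C1" using ic_min[OF C1 ideal_Int[OF iC1 iC2]] False by blast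
  moreover have "\<not> C1 \<inter> C2 \<subset> C2" using ic_min[OF C2 ideal_Int[OF iC1 iC2]] False by blast
  ultimately have "C1 = C2" by blast
  then show ?thesis by simp
next
  case True
  have iC1: "ideal C1" and iC2: "ideal C2" using C1 C2 ic_ideal by auto
  define X where "X = ssum (ssum (kc C1) (kc C2)) (C1 \<inter> C2)"
  have iX: "ideal X" unfolding X_def by (simp add: ideal_ssum kc_ideal ideal_Int iC1 iC2)
  have sX: "subspace X" using iX ideal_sub by auto
  have "ssum (kc C1) (kc C2) \<subseteq> M" by (rule ssum_least[OF kc_M[OF M C1] kc_M[OF M C2] maxs_sub[OF M]])
  then have XM: "X \<subseteq> M" unfolding X_def by (rule ssum_least[OF _ True maxs_sub[OF M]])
  have k1: "kc C1 \<subseteq> X" unfolding X_def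
    by (rule subset_trans[OF ssum_sup1[OF ideal_sub[OF kc_ideal]] ssum_sup1[OF ideal_sub[OF ideal_Int[OF iC1 iC2]]]])
  have k2: "kc C2 \<subseteq> X" unfolding X_def
    by (rule subset_trans[OF ssum_sup2[OF ideal_sub[OF kc_ideal]] ssum_sup1[OF ideal_sub[OF ideal_Int[OF iC1 iC2]]]])
  have d1: "dim (ssum C1 X) + dim (kc C1) = dim C1 + dim X" using ic_X(2)[OF M C1 iX XM k1] .
  have d2: "dim (ssum C2 X) + dim (kc C2) = dim C2 + dim X" using ic_X(2)[OF M C2 iX XM k2] .
  have le1: "dim (kc C1) \<le> dim C1" and le2: "dim (kc C2) \<le> dim C2"
    using dim_le kc_sub ideal_sub iC1 iC2 by auto
  define Y where "Y = ssum C1 X \<inter> ssum C2 X"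
  have iY: "ideal Y" unfolding Y_def using ideal_Int ideal_ssum iC1 iC2 iX by auto
  have XY: "X \<subseteq> Y" unfolding Y_def using ssum_sup2[OF ideal_sub[OF iC1]] ssum_sup2[OF ideal_sub[OF iC2]] by blast
  have Y1: "Y = X \<or> Y = ssum C1 X" using ic_X(3)[OF M C1 iX XM k1 iY XY] unfolding Y_def by blast
  show ?thesis
  proof (cases "Y = X")
    case True
    have "dim (UNIV::'b set) + dim X = dim M + dim (ssum C1 X)"
      using codim_lemma[OF M C1 C2 iX XM k1] True Y_def by simp
    moreover have "dim (UNIV::'b set) + dim X = dim M + dim (ssum C2 X)"
      using codim_lemma[OF M C2 C1 iX XM k2] True Y_def by (simp add: Int_commute)
    ultimately show ?thesis using d1 d2 le1 le2 by linarith
  next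
    case False
    then have YC1: "Y = ssum C1 X" using Y1 by blast
    then have "ssum C1 X \<subseteq> ssum C2 X" unfolding Y_def by blast
    then have "ssum C1 X = X \<or> ssum C1 X = ssum C2 X"
      using ic_X(3)[OF M C2 iX XM k2, of "ssum C1 X"] ideal_ssum[OF iC1 iX] ssum_sup2[OF ideal_sub[OF iC1]] by blast
    moreover have "ssum C1 X \<noteq> X" using ic_notin[OF C1] ssum_sup1[OF sX, of C1] XM by blast
    ultimately have "ssum C1 X = ssum C2 X" by blast
    then have "dim (ssum C1 X) = dim (ssum C2 X)" by simp
    then show ?thesis using d1 d2 le1 le2 by linarith
  qed
qed

lemma index_eq: assumes M: "maxs M" and C: "ic M C"
  shows "ideal_index scale br M = dim C - dim (kc C)"
proof -
  have ex: "\<exists>d. \<exists>C. ic M C \<and> d = dim C - dim (kc C)" using C by blast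
  obtain C' where "ic M C'" "ideal_index scale br M = dim C' - dim (kc C')"
    using someI_ex[OF ex] unfolding ideal_index_def by blast
  then show ?thesis using indep[OF M C] by simp
qed

end



context lie_fd begin

lemma span_sub_eq: "subspace S \<Longrightarrow> span S = S" by simp

lemma step_span:
  assumes "subspace A" "subspace B" "A \<subseteq> B" "dim B = dim A + 1"
  shows "\<exists>v. v \<in> B \<and> v \<notin> A \<and> B = span (insert v A)"
proof -
  have "A \<noteq> B" using assms(4) by auto
  then obtain v where v: "v \<in> B" "v \<notin> A" using assms(3) by blast
  have "span (insert v A) \<subseteq> B" using v assms by (simp add: span_minimal)
  moreover have "dim (span (insert v A)) = dim A + 1"
    using v(2) fd.dim_insert[of v A] span_sub_eq[OF assms(1)] by simp
  ultimately have "span (insert v A) = B"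
    using sub_eq_dim[of "span (insert v A)" B] assms by simp
  then show ?thesis using v by blast
qed

lemma dim_insert_le: "dim (span (insert y S)) \<le> dim S + 1"
  using fd.dim_insert[of y S] by simp

lemma fwd:
  assumes ss: "supersolvable scale br" and M: "maxs M" and C: "ic M C"
  shows "dim C - dim (kc C) = 1"
proof -
  obtain n Ls where L0: "Ls 0 = {0}" and Ln: "Ls n = UNIV" and Li: "\<forall>i\<le>n. ideal (Ls i)"
    and Ls: "\<forall>i<n. Ls i \<subseteq> Ls (Suc i) \<and> dim (Ls (Suc i)) = dim (Ls i) + 1"
    using ss unfolding supersolvable_def by blast
  define k where "k = kc C"
  have iC: "ideal C" using ic_ideal[OF C] .
  have sC: "subspace C" using ideal_sub[OF iC] .
  have ik: "ideal k" unfolding k_def by (rule kc_ideal)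
  have sk: "subspace k" using ideal_sub[OF ik] .
  have kC: "k \<subset> C" unfolding k_def by (rule kc_psub[OF M C])
  define J where "J i = ssum k (Ls i \<inter> C)" for i
  have iJ: "ideal (J i)" if "i \<le> n" for i
    unfolding J_def using ik Li iC that by (simp add: ideal_ssum ideal_Int)
  have kJ: "k \<subseteq> J i" if "i \<le> n" for i
    unfolding J_def by (rule ssum_sup1[OF ideal_sub[OF ideal_Int[OF Li[rule_format, OF that] iC]]])
  have JC: "J i \<subseteq> C" for i
    unfolding J_def by (rule ssum_least) (use kC sC in auto)
  have J2: "J i = k \<or> J i = C" if "i \<le> n" for i
  proof (cases "J i = C")
    case False
    then have "J i \<subseteq> k" unfolding k_def using kc_ge[OF iJ[OF that]] JC[of i] by blast
    then show ?thesis using kJ[OF that] by blast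
  qed simp
  have J0: "J 0 = k"
  proof -
    have "J 0 \<subseteq> k" unfolding J_def L0 by (rule ssum_least) (use sk subspace_0 in auto)
    then show ?thesis using kJ[of 0] by blast
  qed
  have Jn: "J n = C"
  proof -
    have "C \<subseteq> J n" unfolding J_def Ln using ssum_sup2[OF sk, of C] by simp
    then show ?thesis using JC[of n] by blast
  qed
  have "\<exists>i<n. J i = k \<and> J (Suc i) = C"
  proof (rule ccontr)
    assume "\<not> ?thesis"
    then have st: "\<And>i. i < n \<Longrightarrow> J i = k \<Longrightarrow> J (Suc i) = k" using J2 by (metis Suc_leI)
    have "i \<le> n \<Longrightarrow> J i = k" for i
      by (induction i) (use J0 st in auto)
    then show False using Jn kC by auto
  qed
  then obtain i where i: "i < n" "J i = k" "J (Suc i) = C" by blast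
  have sLi: "subspace (Ls i)" and sLs: "subspace (Ls (Suc i))" using Li i(1) ideal_sub by auto
  obtain v where v: "v \<in> Ls (Suc i)" "v \<notin> Ls i" "Ls (Suc i) = span (insert v (Ls i))"
    using step_span[OF sLi sLs] Ls i(1) by blast
  have "\<exists>y0. C \<subseteq> span (insert y0 k)"
  proof (cases "Ls (Suc i) \<inter> C \<subseteq> Ls i")
    case True
    then have "J (Suc i) \<subseteq> J i" unfolding J_def by (intro ssum_mono) auto
    then show ?thesis using i kC by blast
  next
    case False
    then obtain y0 where y0: "y0 \<in> Ls (Suc i)" "y0 \<in> C" "y0 \<notin> Ls i" by blast
    obtain a0 where a0: "y0 - scale a0 v \<in> Ls i"
      using y0(1) v(3) span_breakdown_eq[of y0 v "Ls i"] span_sub_eq[OF sLi] by auto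
    have a0ne: "a0 \<noteq> 0" using a0 y0(3) by auto
    have LC: "Ls (Suc i) \<inter> C \<subseteq> span (insert y0 (Ls i \<inter> C))"
    proof
      fix y assume y: "y \<in> Ls (Suc i) \<inter> C"
      obtain a where a: "y - scale a v \<in> Ls i"
        using y v(3) span_breakdown_eq[of y v "Ls i"] span_sub_eq[OF sLi] by auto
      have eq: "y - scale (a / a0) y0 = (y - scale a v) - scale (a / a0) (y0 - scale a0 v)"
        using a0ne by (simp add: scale_right_diff_distrib)
      have "y - scale (a / a0) y0 \<in> Ls i" unfolding eq
        using a a0 sLi by (simp add: subspace_diff subspace_scale)
      moreover have "y - scale (a / a0) y0 \<in> C" using y y0(2) sC by (simp add: subspace_diff subspace_scale)
      ultimately have "y - scale (a / a0) y0 \<in> span (Ls i \<inter> C)" using span_base by blast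
      then show "y \<in> span (insert y0 (Ls i \<inter> C))" using span_breakdown_eq by blast
    qed
    have "Ls i \<inter> C \<subseteq> J i" unfolding J_def using ssum_sup2[OF sk] .
    then have "span (insert y0 (Ls i \<inter> C)) \<subseteq> span (insert y0 k)" using i(2) by (intro span_mono) auto
    then have LC2: "Ls (Suc i) \<inter> C \<subseteq> span (insert y0 k)" using LC by blast
    have "k \<subseteq> span (insert y0 k)" using span_superset by blast
    from this LC2 have "J (Suc i) \<subseteq> span (insert y0 k)" unfolding J_def by (rule ssum_least) simp
    then show ?thesis using i(3) by blast
  qed
  then obtain y0 where "C \<subseteq> span (insert y0 k)" by blast
  then have "dim C \<le> dim k + 1" using dim_le[of C] dim_insert_le[of y0 k] by (meson order_trans)
  moreover have "dim k < dim C" using dim_lt[OF sk sC kC] .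
  ultimately show ?thesis unfolding k_def by linarith
qed

lemma F1:
  assumes M: "maxs M" and hyp: "\<And>C. ic M C \<Longrightarrow> dim C - dim (kc C) = 1"
    and K: "ideal K" "K \<subseteq> M" and H: "ideal H" "K \<subseteq> H" "\<not> H \<subseteq> M"
    and chief: "\<And>Z. ideal Z \<Longrightarrow> K \<subseteq> Z \<Longrightarrow> Z \<subseteq> H \<Longrightarrow> Z = K \<or> Z = H"
  shows "dim H = dim K + 1"
proof -
  obtain C where C: "ideal C \<and> C \<subseteq> H \<and> \<not> C \<subseteq> M"
    and mn: "\<forall>Z. ideal Z \<and> Z \<subseteq> H \<and> \<not> Z \<subseteq> M \<longrightarrow> dim C \<le> dim Z"
    using min_dim[of "\<lambda>I. ideal I \<and> I \<subseteq> H \<and> \<not> I \<subseteq> M" H] H by blast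
  have iC: "ideal C" and CH: "C \<subseteq> H" and CM: "\<not> C \<subseteq> M" using C by auto
  have icC: "ic M C" unfolding ideal_completion_def completion_def
  proof (intro conjI allI impI)
    show "subalg C" "ideal C" using iC ideal_subalg by auto
    show "\<not> C \<subseteq> M" using CM .
    fix I assume I: "subalg I \<and> I \<subset> C \<and> ideal I"
    then have "dim I < dim C" using dim_lt ideal_sub iC by blast
    moreover have "I \<subseteq> H" using I CH by blast
    ultimately show "I \<subseteq> M" using mn I by (meson not_le)
  qed
  have sK: "subspace K" using ideal_sub[OF K(1)] .
  have CK: "C \<inter> K \<subseteq> kc C"
    by (rule kc_ge) (use ideal_Int[OF iC K(1)] K(2) CM in blast)+
  have "ssum (kc C) K = K \<or> ssum (kc C) K = H"
    by (rule chief) (use ideal_ssum[OF kc_ideal K(1)] ssum_sup2[OF ideal_sub[OF kc_ideal]] 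
        ssum_least[OF subset_trans[OF kc_sub[OF ideal_sub[OF iC]] CH] H(2) ideal_sub[OF H(1)]] in auto)
  moreover have "ssum (kc C) K \<noteq> H"
  proof
    assume "ssum (kc C) K = H"
    moreover have "ssum (kc C) K \<subseteq> M" by (rule ssum_least[OF kc_M[OF M icC] K(2) maxs_sub[OF M]])
    ultimately show False using CH CM by blast
  qed
  ultimately have "ssum (kc C) K = K" by blast
  then have "kc C \<subseteq> K" using ssum_sup1[OF sK, of "kc C"] by simp
  then have kCK: "kc C = C \<inter> K" using CK kc_sub[OF ideal_sub[OF iC]] by blast
  have "ssum C K = K \<or> ssum C K = H"
    by (rule chief) (use ideal_ssum[OF iC K(1)] ssum_sup2[OF ideal_sub[OF iC]] 
        ssum_least[OF CH H(2) ideal_sub[OF H(1)]] in auto)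
  moreover have "ssum C K \<noteq> K" using ssum_sup1[OF sK, of C] CM K(2) by blast
  ultimately have "ssum C K = H" by blast
  then have "dim H + dim (kc C) = dim C + dim K" using dim_ssum[OF ideal_sub[OF iC] sK] kCK by simp
  moreover have "dim (kc C) \<le> dim C" using dim_le kc_sub ideal_sub iC by blast
  moreover have "dim C - dim (kc C) = 1" using hyp[OF icC] .
  ultimately show ?thesis by linarith
qed

end



context lie_fd begin

definition adm :: "'b \<Rightarrow> 'a \<Rightarrow> 'b \<Rightarrow> 'b" where "adm x c v = br x v - scale c v"

lemma lin_adm: "lin (adm x c)"
  unfolding lin_def adm_def by (simp add: br_addR br_scaleR scale_right_distrib algebra_simps)

lemma adm_K: "ideal K \<Longrightarrow> u \<in> K \<Longrightarrow> adm x c u \<in> K"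
  unfolding adm_def by (meson ideal_br ideal_sub subspace_diff subspace_scale)

lemma admpow_K: "ideal K \<Longrightarrow> u \<in> K \<Longrightarrow> (adm x c ^^ n) u \<in> K"
  by (rule pow_K[of K]) (auto intro: adm_K)

lemma adm_br: "adm x (a + b) (br u v) = br (adm x a u) v + br u (adm x b v)"
  unfolding adm_def by (simp add: jac[of x u v] br_diffL br_diffR br_scaleL br_scaleR scale_left_distrib algebra_simps)

lemma leib:
  assumes K: "ideal K"
  shows "(adm x a ^^ m) u \<in> K \<Longrightarrow> (adm x b ^^ m') v \<in> K \<Longrightarrow> (adm x (a + b) ^^ (m + m')) (br u v) \<in> K"
proof (induction "m + m'" arbitrary: m m' u v rule: less_induct)
  case less
  show ?case
  proof (cases m)
    case 0
    then have "br u v \<in> K" using less.prems(1) ideal_brL[OF K] by simp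
    then show ?thesis by (rule admpow_K[OF K])
  next
    case (Suc p)
    show ?thesis
    proof (cases m')
      case 0
      then have "br u v \<in> K" using less.prems(2) ideal_br[OF K] by simp
      then show ?thesis by (rule admpow_K[OF K])
    next
      case (Suc q)
      have e: "m + m' = Suc (p + m')" using \<open>m = Suc p\<close> by simp
      have i1: "(adm x (a + b) ^^ (p + m')) (br (adm x a u) v) \<in> K"
        using less.hyps[of p m' "adm x a u" v] less.prems \<open>m = Suc p\<close> by (simp add: pow_swap)
      have i2: "(adm x (a + b) ^^ (m + q)) (br u (adm x b v)) \<in> K"
        using less.hyps[of m q u "adm x b v"] less.prems \<open>m' = Suc q\<close> by (simp add: pow_swap)
      have "p + m' = m + q" using \<open>m = Suc p\<close> \<open>m' = Suc q\<close> by simp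
      then have "(adm x (a + b) ^^ (p + m')) (adm x (a + b) (br u v)) \<in> K"
        using i1 i2 unfolding adm_br lin_add[OF lin_pow[OF lin_adm]]
        by (metis ideal_sub[OF K] subspace_add)
      then show ?thesis unfolding e by (simp add: pow_swap)
    qed
  qed
qed

definition Wc :: "'b \<Rightarrow> 'b set \<Rightarrow> 'a \<Rightarrow> 'b set" where
  "Wc x K c = {v. \<exists>n. (adm x c ^^ n) v \<in> K}"

lemma Wc_sub: assumes K: "ideal K" shows "subspace (Wc x K c)"
  unfolding subspace_def Wc_def
proof (intro conjI ballI allI)
  show "0 \<in> {v. \<exists>n. (adm x c ^^ n) v \<in> K}"
    using lin_0[OF lin_pow[OF lin_adm]] subspace_0[OF ideal_sub[OF K]] by auto
  fix u v assume u: "u \<in> {v. \<exists>n. (adm x c ^^ n) v \<in> K}" and v: "v \<in> {v. \<exists>n. (adm x c ^^ n) v \<in> K}"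
  then obtain n1 n2 where n: "(adm x c ^^ n1) u \<in> K" "(adm x c ^^ n2) v \<in> K" by auto
  have "(adm x c ^^ (n2 + n1)) u \<in> K" using admpow_K[OF K n(1)] by (simp add: pow_pow[symmetric])
  moreover have "(adm x c ^^ (n1 + n2)) v \<in> K" using admpow_K[OF K n(2)] by (simp add: pow_pow[symmetric])
  ultimately have "(adm x c ^^ (n1 + n2)) (u + v) \<in> K"
    using lin_add[OF lin_pow[OF lin_adm]] ideal_sub[OF K] subspace_add by (metis add.commute)
  then show "u + v \<in> {v. \<exists>n. (adm x c ^^ n) v \<in> K}" by blast
next
  fix a u assume u: "u \<in> {v. \<exists>n. (adm x c ^^ n) v \<in> K}"
  then obtain n where n: "(adm x c ^^ n) u \<in> K" by auto
  then have "(adm x c ^^ n) (scale a u) \<in> K"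
    using lin_scale[OF lin_pow[OF lin_adm]] ideal_sub[OF K] subspace_scale by metis
  then show "scale a u \<in> {v. \<exists>n. (adm x c ^^ n) v \<in> K}" by blast
qed

lemma K_Wc: "K \<subseteq> Wc x K c" unfolding Wc_def by (auto intro: exI[of _ 0])

lemma Wc_inv: assumes "ideal K" "u \<in> Wc x K c" shows "adm x c u \<in> Wc x K c"
proof -
  obtain n where "(adm x c ^^ n) u \<in> K" using assms(2) unfolding Wc_def by auto
  then have "(adm x c ^^ n) (adm x c u) \<in> K" using adm_K[OF assms(1)] by (simp add: pow_swap)
  then show ?thesis unfolding Wc_def by blast
qed

lemma Wc_br: assumes K: "ideal K" "u \<in> Wc x K a" "v \<in> Wc x K b" shows "br u v \<in> Wc x K (a + b)"
proof -
  obtain m m' where "(adm x a ^^ m) u \<in> K" "(adm x b ^^ m') v \<in> K" using assms unfolding Wc_def by auto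
  then have "(adm x (a + b) ^^ (m + m')) (br u v) \<in> K" by (rule leib[OF K(1)])
  then show ?thesis unfolding Wc_def by blast
qed

lemma Wc_pre: assumes "ideal K" "adm x c u \<in> Wc x K c" shows "u \<in> Wc x K c"
proof -
  obtain n where "(adm x c ^^ n) (adm x c u) \<in> K" using assms(2) unfolding Wc_def by auto
  then have "(adm x c ^^ Suc n) u \<in> K" by (simp add: pow_swap)
  then show ?thesis unfolding Wc_def by blast
qed

end



context lie_fd begin

fun Q :: "'b \<Rightarrow> 'a list \<Rightarrow> 'b \<Rightarrow> 'b" where
  "Q x [] v = v"
| "Q x (c # cs) v = adm x c (Q x cs v)"

lemma lin_Q: "lin (Q x cs)"
  by (induction cs) (auto simp: lin_def lin_add[OF lin_adm] lin_scale[OF lin_adm])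

lemma adm_comm: "adm x c (adm x d v) = adm x d (adm x c v)"
  unfolding adm_def by (simp add: br_diffR br_scaleR algebra_simps)

lemma Q_adm: "Q x cs (adm x d v) = adm x d (Q x cs v)"
  by (induction cs) (auto simp: adm_comm)

lemma Q_app: "Q x (cs @ ds) v = Q x cs (Q x ds v)"
  by (induction cs) auto

lemma Q_comm: "Q x cs (Q x ds v) = Q x ds (Q x cs v)"
  by (induction ds) (auto simp: Q_adm)

lemma Q_K: "ideal K \<Longrightarrow> u \<in> K \<Longrightarrow> Q x cs u \<in> K"
  by (induction cs) (auto intro: adm_K)

lemma Q_rep: "Q x (replicate n c) v = (adm x c ^^ n) v"
  by (induction n) auto

lemma W_in:
  assumes K: "ideal K" and w: "w \<in> span (\<Union>c. Wc x K c)"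
  shows "\<exists>cs. Q x cs w \<in> K"
proof -
  have sK: "subspace K" using ideal_sub[OF K] .
  have "subspace {w. \<exists>cs. Q x cs w \<in> K}"
    unfolding subspace_def
  proof (intro conjI ballI allI)
    show "0 \<in> {w. \<exists>cs. Q x cs w \<in> K}" using subspace_0[OF sK] by (auto intro: exI[of _ "[]"])
    fix u v assume "u \<in> {w. \<exists>cs. Q x cs w \<in> K}" "v \<in> {w. \<exists>cs. Q x cs w \<in> K}"
    then obtain cs ds where cd: "Q x cs u \<in> K" "Q x ds v \<in> K" by auto
    have "Q x (cs @ ds) (u + v) = Q x ds (Q x cs u) + Q x cs (Q x ds v)"
      by (simp add: Q_app lin_add[OF lin_Q] Q_comm)
    also have "\<dots> \<in> K" using cd Q_K[OF K] subspace_add[OF sK] by blast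
    finally show "u + v \<in> {w. \<exists>cs. Q x cs w \<in> K}" by blast
  next
    fix a u assume "u \<in> {w. \<exists>cs. Q x cs w \<in> K}"
    then obtain cs where "Q x cs u \<in> K" by auto
    then have "Q x cs (scale a u) \<in> K" using lin_scale[OF lin_Q] subspace_scale[OF sK] by metis
    then show "scale a u \<in> {w. \<exists>cs. Q x cs w \<in> K}" by blast
  qed
  moreover have "\<exists>cs. Q x cs u \<in> K" if "u \<in> (\<Union>c. Wc x K c)" for u
  proof -
    from that obtain c where "u \<in> Wc x K c" by blast
    then obtain n where "(adm x c ^^ n) u \<in> K" unfolding Wc_def by auto
    then show ?thesis by (metis Q_rep)
  qed
  ultimately show ?thesis using span_induct[OF w, of "\<lambda>w. \<exists>cs. Q x cs w \<in> K"] by blast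
qed

lemma Q_inj:
  assumes H: "ideal H" and noeig: "\<And>c h. h \<in> H \<Longrightarrow> adm x c h \<in> K \<Longrightarrow> h \<in> K"
  shows "h \<in> H \<Longrightarrow> Q x cs h \<in> K \<Longrightarrow> h \<in> K"
proof (induction cs)
  case Nil then show ?case by simp
next
  case (Cons c cs)
  have "Q x cs h \<in> H" using Q_K[OF H Cons.prems(1)] .
  then have "Q x cs h \<in> K" using noeig Cons.prems(2) by simp
  then show ?case using Cons by blast
qed

lemma adm_shift: "adm x d u = adm x l u + scale (l - d) u"
  unfolding adm_def by (simp add: scale_left_diff_distrib algebra_simps)

lemma Wc_inv2: assumes K: "ideal K" and u: "u \<in> Wc x K d" shows "adm x l u \<in> Wc x K d"
proof -
  have "adm x l u = adm x d u - scale (l - d) u" using adm_shift[of x d u l] by simp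
  then show ?thesis using Wc_inv[OF K u] u Wc_sub[OF K] by (metis subspace_diff subspace_scale)
qed

lemma Wc_inj:
  assumes K: "ideal K" and ne: "d \<noteq> l" and u: "u \<in> Wc x K d" and a: "adm x l u \<in> K"
  shows "u \<in> K"
proof -
  have sK: "subspace K" using ideal_sub[OF K] .
  define s where "s = l - d"
  have s0: "s \<noteq> 0" using ne s_def by simp
  have "(adm x d ^^ n) u - scale (s ^ n) u \<in> K" for n
  proof (induction n)
    case 0 then show ?case using subspace_0[OF sK] by simp
  next
    case (Suc n)
    define k where "k = (adm x d ^^ n) u - scale (s ^ n) u"
    have z: "(adm x d ^^ n) u = k + scale (s ^ n) u" unfolding k_def by simp
    have "(adm x d ^^ Suc n) u = adm x d k + scale (s ^ n) (adm x l u + scale s u)"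
      by (simp add: z lin_add[OF lin_adm] lin_scale[OF lin_adm] adm_shift[of x d u l] s_def)
    then have eq: "(adm x d ^^ Suc n) u - scale (s ^ Suc n) u = adm x d k + scale (s ^ n) (adm x l u)"
      by (simp add: scale_right_distrib mult.commute)
    have "adm x d k \<in> K" using adm_K[OF K] Suc k_def by blast
    moreover have "scale (s ^ n) (adm x l u) \<in> K" using a subspace_scale[OF sK] by blast
    ultimately have "adm x d k + scale (s ^ n) (adm x l u) \<in> K" by (rule subspace_add[OF sK])
    then show ?case by (simp only: eq)
  qed
  moreover obtain n where "(adm x d ^^ n) u \<in> K" using u unfolding Wc_def by auto
  ultimately have "(adm x d ^^ n) u - ((adm x d ^^ n) u - scale (s ^ n) u) \<in> K"
    using subspace_diff[OF sK] by blast
  then have "scale (s ^ n) u \<in> K" by simp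
  then have "scale (inverse (s ^ n)) (scale (s ^ n) u) \<in> K" using subspace_scale[OF sK] by blast
  then show ?thesis using s0 by simp
qed

lemma dec:
  assumes K: "ideal K" and w: "w \<in> span (\<Union>c. Wc x K c)"
  shows "\<exists>w'\<in>span (\<Union>c. Wc x K c). w - adm x l w' \<in> Wc x K l"
proof -
  define W where "W = span (\<Union>c. Wc x K c)"
  have sWl: "subspace (Wc x K l)" using Wc_sub[OF K] .
  have "subspace {w. \<exists>w'\<in>W. w - adm x l w' \<in> Wc x K l}"
    unfolding subspace_def
  proof (intro conjI ballI allI)
    have "(0::'b) \<in> W" unfolding W_def by (rule span_zero)
    moreover have "0 - adm x l 0 \<in> Wc x K l" using lin_0[OF lin_adm] subspace_0[OF sWl] by simp
    ultimately show "0 \<in> {w. \<exists>w'\<in>W. w - adm x l w' \<in> Wc x K l}" by blast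
    fix u v assume "u \<in> {w. \<exists>w'\<in>W. w - adm x l w' \<in> Wc x K l}" "v \<in> {w. \<exists>w'\<in>W. w - adm x l w' \<in> Wc x K l}"
    then obtain u' v' where uv: "u' \<in> W" "u - adm x l u' \<in> Wc x K l" "v' \<in> W" "v - adm x l v' \<in> Wc x K l" by auto
    have eq: "u + v - adm x l (u' + v') = (u - adm x l u') + (v - adm x l v')"
      by (simp add: lin_add[OF lin_adm] algebra_simps)
    have "u + v - adm x l (u' + v') \<in> Wc x K l" unfolding eq by (rule subspace_add[OF sWl uv(2) uv(4)])
    moreover have "u' + v' \<in> W" using uv span_add unfolding W_def by blast
    ultimately show "u + v \<in> {w. \<exists>w'\<in>W. w - adm x l w' \<in> Wc x K l}" by blast
  next
    fix a u assume "u \<in> {w. \<exists>w'\<in>W. w - adm x l w' \<in> Wc x K l}"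
    then obtain u' where u: "u' \<in> W" "u - adm x l u' \<in> Wc x K l" by auto
    have eq: "scale a u - adm x l (scale a u') = scale a (u - adm x l u')"
      by (simp add: lin_scale[OF lin_adm] scale_right_diff_distrib)
    have "scale a u - adm x l (scale a u') \<in> Wc x K l" unfolding eq by (rule subspace_scale[OF sWl u(2)])
    moreover have "scale a u' \<in> W" using u span_scale unfolding W_def by blast
    ultimately show "scale a u \<in> {w. \<exists>w'\<in>W. w - adm x l w' \<in> Wc x K l}" by blast
  qed
  moreover have "\<exists>w'\<in>W. u - adm x l w' \<in> Wc x K l" if "u \<in> (\<Union>c. Wc x K c)" for u
  proof -
    from that obtain d where d: "u \<in> Wc x K d" by blast
    show ?thesis
    proof (cases "d = l")
      case True
      have "(0::'b) \<in> W" unfolding W_def by (rule span_zero)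
      moreover have "u - adm x l 0 \<in> Wc x K l" using lin_0[OF lin_adm] d True by simp
      ultimately show ?thesis by blast
    next
      case False
      have "\<exists>u'\<in>Wc x K d. u - adm x l u' \<in> K"
        by (rule surj_mod[OF lin_adm Wc_sub[OF K] ideal_sub[OF K] K_Wc _ _ _ d])
           (erule Wc_inv2[OF K], erule adm_K[OF K], erule (1) Wc_inj[OF K False])
      then obtain u' where u': "u' \<in> Wc x K d" "u - adm x l u' \<in> K" by blast
      have "u' \<in> W" unfolding W_def using u' span_base by blast
      moreover have "u - adm x l u' \<in> Wc x K l" using u'(2) K_Wc by blast
      ultimately show ?thesis by blast
    qed
  qed
  ultimately show ?thesis using span_induct[OF w, of "\<lambda>w. \<exists>w'\<in>W. w - adm x l w' \<in> Wc x K l"]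
    unfolding W_def by blast
qed

end



context lie_fd begin

lemma W_split:
  assumes K: "ideal K" and H: "ideal H" "K \<subseteq> H"
    and ch0: "Hs 0 = H" and chm: "Hs m = UNIV" and chi: "\<forall>j\<le>m. ideal (Hs j)"
    and chs: "\<forall>j<m. Hs j \<subseteq> Hs (Suc j) \<and> dim (Hs (Suc j)) = dim (Hs j) + 1"
    and noeig: "\<And>c h. h \<in> H \<Longrightarrow> adm x c h \<in> K \<Longrightarrow> h \<in> K"
  shows "subalg (span (\<Union>c. Wc x K c)) \<and> K \<subseteq> span (\<Union>c. Wc x K c) \<and>
         ssum (span (\<Union>c. Wc x K c)) H = UNIV \<and> span (\<Union>c. Wc x K c) \<inter> H \<subseteq> K"
proof -
  define W where "W = span (\<Union>c. Wc x K c)"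
  have sW: "subspace W" unfolding W_def by simp
  have sH: "subspace H" using ideal_sub[OF H(1)] .
  have WcW: "Wc x K c \<subseteq> W" for c unfolding W_def using span_superset by blast
  have saW: "subalg W" unfolding lie_subalgebra_def
  proof (intro conjI ballI)
    show "subspace W" by (rule sW)
    fix a b assume "a \<in> W" "b \<in> W"
    show "br a b \<in> W"
    proof (rule br_span[of "\<Union>c. Wc x K c" "\<Union>c. Wc x K c" W])
      fix u v assume "u \<in> (\<Union>c. Wc x K c)" "v \<in> (\<Union>c. Wc x K c)"
      then obtain c d where "u \<in> Wc x K c" "v \<in> Wc x K d" by blast
      then have "br u v \<in> Wc x K (c + d)" by (rule Wc_br[OF K])
      then show "br u v \<in> W" using WcW by blast
    qed (use sW \<open>a \<in> W\<close> \<open>b \<in> W\<close> W_def in auto)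
  qed
  have KW: "K \<subseteq> W" using K_Wc[of K x 0] WcW[of 0] by blast
  have WH: "W \<inter> H \<subseteq> K"
  proof
    fix h assume h: "h \<in> W \<inter> H"
    then obtain cs where cs: "Q x cs h \<in> K" using W_in[OF K] unfolding W_def by blast
    show "h \<in> K"
    proof (rule Q_inj[where H=H and x=x and K=K and cs=cs])
      show "ideal H" by (rule H(1))
      show "\<And>c h. h \<in> H \<Longrightarrow> adm x c h \<in> K \<Longrightarrow> h \<in> K" by (rule noeig)
      show "h \<in> H" using h by blast
      show "Q x cs h \<in> K" by (rule cs)
    qed
  qed
  have sS: "subspace (ssum W H)" using subspace_ssum[OF sW sH] .
  have "j \<le> m \<Longrightarrow> Hs j \<subseteq> ssum W H" for j
  proof (induction j)
    case 0 then show ?case using ch0 ssum_sup2[OF sW] by simp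
  next
    case (Suc j)
    then have jm: "j < m" by simp
    have sj: "subspace (Hs j)" and sj1: "subspace (Hs (Suc j))" and ij1: "ideal (Hs (Suc j))"
      using chi jm ideal_sub by auto
    obtain v where v: "v \<in> Hs (Suc j)" "Hs (Suc j) = span (insert v (Hs j))"
      using step_span[OF sj sj1] chs jm by blast
    have "br x v \<in> span (insert v (Hs j))" using ideal_br[OF ij1 v(1)] v(2) by simp
    then obtain l where "br x v - scale l v \<in> Hs j"
      using span_breakdown_eq[of "br x v" v "Hs j"] span_sub_eq[OF sj] by auto
    then have "adm x l v \<in> ssum W H" using Suc jm unfolding adm_def by auto
    then obtain w h where wh: "w \<in> W" "h \<in> H" "adm x l v = w + h" by (auto elim!: ssum_E)
    obtain h' where h': "h' \<in> H" "h - adm x l h' \<in> K"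
      using surj_mod[OF lin_adm sH ideal_sub[OF K] H(2) _ _ _ wh(2), of x l]
        adm_K[OF H(1)] adm_K[OF K] noeig by blast
    obtain w' where w': "w' \<in> W" "w - adm x l w' \<in> Wc x K l"
      using dec[OF K, of w x l] wh(1) unfolding W_def by blast
    define z where "z = v - h' - w'"
    have "adm x l z = (w - adm x l w') + (h - adm x l h')"
      unfolding z_def using wh(3) by (simp add: lin_diff[OF lin_adm] lin_add[OF lin_adm] algebra_simps)
    moreover have "h - adm x l h' \<in> Wc x K l" using h'(2) K_Wc by blast
    ultimately have "adm x l z \<in> Wc x K l" using w'(2) Wc_sub[OF K] by (metis subspace_add)
    then have "z \<in> Wc x K l" by (rule Wc_pre[OF K])
    then have "z + w' \<in> W" using WcW w'(1) sW by (meson subsetD subspace_add)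
    then have "v \<in> ssum W H" using ssum_I[OF _ h'(1), of "z + w'" W] unfolding z_def by simp
    then have "insert v (Hs j) \<subseteq> ssum W H" using Suc jm by auto
    then show ?case using v(2) span_minimal[OF _ sS] by simp
  qed
  then have "ssum W H = UNIV" using chm by blast
  then show ?thesis using saW KW WH unfolding W_def by blast
qed

lemma W0_split:
  assumes K: "ideal K" and H: "ideal H" "K \<subseteq> H" and nil: "\<And>v. (adm x 0 ^^ m) v \<in> H"
  shows "subalg (Wc x K 0) \<and> K \<subseteq> Wc x K 0 \<and> ssum (Wc x K 0) H = UNIV"
proof -
  have sH: "subspace H" using ideal_sub[OF H(1)] .
  have sa: "subalg (Wc x K 0)" unfolding lie_subalgebra_def
    using Wc_sub[OF K] Wc_br[OF K, of _ x 0 _ 0] by simp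
  obtain N where N: "\<forall>k. \<forall>u\<in>H. \<exists>u'\<in>H. (adm x 0 ^^ N) u - (adm x 0 ^^ (N + k)) u' \<in> K"
    using fit2[OF lin_adm sH ideal_sub[OF K] H(2), of x 0] adm_K[OF H(1)] adm_K[OF K] by blast
  have "v \<in> ssum (Wc x K 0) H" for v
  proof -
    obtain u' where u': "u' \<in> H" "(adm x 0 ^^ N) ((adm x 0 ^^ m) v) - (adm x 0 ^^ (N + m)) u' \<in> K"
      using N nil by blast
    then have "(adm x 0 ^^ (N + m)) (v - u') \<in> K"
      by (simp add: pow_pow lin_diff[OF lin_pow[OF lin_adm]])
    then have "v - u' \<in> Wc x K 0" unfolding Wc_def by blast
    then show ?thesis using ssum_I[OF _ u'(1)] by force
  qed
  then show ?thesis using sa K_Wc by blast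
qed

lemma nil_vec:
  assumes TU: "\<And>u. u \<in> U \<Longrightarrow> T u \<in> U"
  shows "v \<in> U \<Longrightarrow> v \<notin> K' \<Longrightarrow> (T ^^ n) v \<in> K' \<Longrightarrow> \<exists>w\<in>U. w \<notin> K' \<and> T w \<in> K'"
proof (induction n arbitrary: v)
  case 0 then show ?case by simp
next
  case (Suc n)
  show ?case
  proof (cases "T v \<in> K'")
    case True then show ?thesis using Suc by blast
  next
    case False
    moreover have "(T ^^ n) (T v) \<in> K'" using Suc.prems(3) by (simp add: pow_swap)
    ultimately show ?thesis using Suc.IH[of "T v"] TU Suc.prems(1) by blast
  qed
qed

lemma engel:
  assumes K: "ideal K"
  shows "subalg S \<Longrightarrow> K \<subseteq> S \<Longrightarrow> (\<forall>s\<in>S. \<forall>v. \<exists>n. (br s ^^ n) v \<in> K) \<Longrightarrow> subspace V \<Longrightarrow>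
    subspace K' \<Longrightarrow> K \<subseteq> K' \<Longrightarrow> K' \<subset> V \<Longrightarrow> (\<forall>s\<in>S. \<forall>v\<in>V. br s v \<in> V) \<Longrightarrow>
    (\<forall>s\<in>S. \<forall>v\<in>K'. br s v \<in> K') \<Longrightarrow> \<exists>v\<in>V. v \<notin> K' \<and> (\<forall>s\<in>S. br s v \<in> K')"
proof (induction "dim S" arbitrary: S V K' rule: less_induct)
  case less
  note S = less.prems(1) and KS = less.prems(2) and nilS = less.prems(3) and sV = less.prems(4)
    and sK' = less.prems(5) and KK' = less.prems(6) and K'V = less.prems(7) and SV = less.prems(8)
    and SK' = less.prems(9)
  show ?case
  proof (cases "S \<subseteq> K")
    case True
    obtain v where "v \<in> V" "v \<notin> K'" using K'V by blast
    moreover have "\<forall>s\<in>S. br s v \<in> K'" using True ideal_brL[OF K] KK' by blast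
    ultimately show ?thesis by blast
  next
    case False
    have sS: "subspace S" using subalg_sub[OF S] .
    have FK: "subalg K \<and> K \<subseteq> K \<and> K \<subset> S" using ideal_subalg[OF K] KS False by blast
    obtain P where P: "subalg P \<and> K \<subseteq> P \<and> P \<subset> S"
      and mx: "\<forall>Z. subalg Z \<and> K \<subseteq> Z \<and> Z \<subset> S \<longrightarrow> dim Z \<le> dim P"
      using max_dim[of "\<lambda>Z. subalg Z \<and> K \<subseteq> Z \<and> Z \<subset> S" K] FK by blast
    have sP: "subspace P" using P subalg_sub by blast
    have dP: "dim P < dim S" using dim_lt[OF sP sS] P by blast
    have nilP: "\<forall>s\<in>P. \<forall>v. \<exists>n. (br s ^^ n) v \<in> K" using nilS P by blast
    obtain s0 where s0: "s0 \<in> S" "s0 \<notin> P" "\<forall>p\<in>P. br p s0 \<in> P"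
    proof -
      have "\<exists>v\<in>S. v \<notin> P \<and> (\<forall>s\<in>P. br s v \<in> P)"
        by (rule less.hyps[OF dP]) (use P nilP sS sP S subalg_br in \<open>auto\<close>)
      then show ?thesis using that by blast
    qed
    define P' where "P' = ssum P (span {s0})"
    have sP': "subspace P'" unfolding P'_def using subspace_ssum[OF sP] by simp
    have P'S: "P' \<subseteq> S" unfolding P'_def
      by (rule ssum_least) (use P s0(1) span_minimal[OF _ sS, of "{s0}"] sS in auto)
    have P'br: "br a b \<in> P'" if ha: "a \<in> P'" and hb: "b \<in> P'" for a b
    proof -
      obtain p t where pt: "p \<in> P" "a = p + scale t s0"
        using ha unfolding P'_def span_singleton by (auto elim!: ssum_E)
      obtain q r where qr: "q \<in> P" "b = q + scale r s0"
        using hb unfolding P'_def span_singleton by (auto elim!: ssum_E)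
      have e: "br a b = br p q + scale r (br p s0) - scale t (br q s0)"
        unfolding pt(2) qr(2)
        by (simp add: br_addL br_addR br_scaleL br_scaleR br_self skew[of s0 q] algebra_simps)
      have "br p q \<in> P" using subalg_br P pt qr by blast
      moreover have "br p s0 \<in> P" "br q s0 \<in> P" using s0 pt qr by auto
      ultimately have "br a b \<in> P" unfolding e using sP
        by (meson subspace_add subspace_diff subspace_scale)
      then show ?thesis using ssum_sup1[of "span {s0}" P] unfolding P'_def by auto
    qed
    have saP': "subalg P'" unfolding lie_subalgebra_def using sP' P'br by blast
    have PP': "P \<subset> P'"
    proof -
      have "P \<subseteq> P'" unfolding P'_def by (rule ssum_sup1) simp
      moreover have "s0 \<in> P'" unfolding P'_def using ssum_sup2[OF sP, of "span {s0}"] span_base[of s0 "{s0}"] by auto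
      ultimately show ?thesis using s0(2) by blast
    qed
    have P'eq: "P' = S"
    proof (rule ccontr)
      assume "P' \<noteq> S"
      then have "dim P' \<le> dim P" using mx saP' P P'S PP' by blast
      moreover have "dim P < dim P'" using dim_lt[OF sP sP' PP'] .
      ultimately show False by simp
    qed
    obtain v1 where v1: "v1 \<in> V" "v1 \<notin> K'" "\<forall>p\<in>P. br p v1 \<in> K'"
    proof -
      have "\<exists>v\<in>V. v \<notin> K' \<and> (\<forall>s\<in>P. br s v \<in> K')"
        by (rule less.hyps[OF dP]) (use P nilP sV sK' KK' K'V SV SK' in \<open>auto\<close>)
      then show ?thesis using that by blast
    qed
    define V0 where "V0 = {v \<in> V. \<forall>p\<in>P. br p v \<in> K'}"
    have V0inv: "br s0 u \<in> V0" if "u \<in> V0" for u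
    proof -
      have "br s0 u \<in> V" using SV s0(1) that V0_def by blast
      moreover have "br p (br s0 u) \<in> K'" if "p \<in> P" for p
      proof -
        have "br (br p s0) u \<in> K'" using s0(3) that \<open>u \<in> V0\<close> V0_def by blast
        moreover have "br s0 (br p u) \<in> K'" using SK' s0(1) that \<open>u \<in> V0\<close> V0_def by blast
        ultimately show ?thesis unfolding jac[of p s0 u] by (rule subspace_add[OF sK'])
      qed
      ultimately show ?thesis unfolding V0_def by blast
    qed
    obtain n where "(br s0 ^^ n) v1 \<in> K" using nilS s0(1) by blast
    then have "(br s0 ^^ n) v1 \<in> K'" using KK' by blast
    then obtain w where w: "w \<in> V0" "w \<notin> K'" "br s0 w \<in> K'"
      using nil_vec[of V0 "br s0" v1 K' n] V0inv v1 V0_def by blast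
    have "br s w \<in> K'" if hs: "s \<in> S" for s
    proof -
      obtain p t where pt: "p \<in> P" "s = p + scale t s0"
        using hs unfolding P'eq[symmetric] P'_def span_singleton by (auto elim!: ssum_E)
      have "br p w \<in> K'" using w(1) pt(1) V0_def by blast
      then show ?thesis unfolding pt(2) br_addL br_scaleL using w(3) sK'
        by (meson subspace_add subspace_scale)
    qed
    then show ?thesis using w V0_def by blast
  qed
qed

end



context lie_fd begin

definition chain_from :: "'b set \<Rightarrow> bool" where
  "chain_from J \<longleftrightarrow> (\<exists>m Hs. Hs 0 = J \<and> Hs m = UNIV \<and> (\<forall>j\<le>m. ideal (Hs j)) \<and>
      (\<forall>j<m. Hs j \<subseteq> Hs (Suc j) \<and> dim (Hs (Suc j)) = dim (Hs j) + 1))"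

lemma min_above:
  assumes "ideal Z" "Z \<noteq> UNIV"
  shows "\<exists>Z'. ideal Z' \<and> Z \<subset> Z' \<and> (\<forall>Y. ideal Y \<and> Z \<subseteq> Y \<and> Y \<subseteq> Z' \<longrightarrow> Y = Z \<or> Y = Z')"
proof -
  have "ideal UNIV \<and> Z \<subset> UNIV" using ideal_UNIV assms by auto
  then obtain Z' where Z': "ideal Z' \<and> Z \<subset> Z'" and mn: "\<forall>Y. ideal Y \<and> Z \<subset> Y \<longrightarrow> dim Z' \<le> dim Y"
    using min_dim[of "\<lambda>Y. ideal Y \<and> Z \<subset> Y" UNIV] by blast
  have "Y = Z \<or> Y = Z'" if Y: "ideal Y" "Z \<subseteq> Y" "Y \<subseteq> Z'" for Y
  proof (rule ccontr)
    assume "\<not> (Y = Z \<or> Y = Z')"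
    then have "Z \<subset> Y" "Y \<subset> Z'" using Y by auto
    then have "dim Y < dim Z'" using dim_lt[OF ideal_sub[OF Y(1)]] ideal_sub Z' by blast
    moreover have "dim Z' \<le> dim Y" using mn Y(1) \<open>Z \<subset> Y\<close> by blast
    ultimately show False by simp
  qed
  then show ?thesis using Z' by blast
qed

lemma chain_exists:
  assumes J: "ideal J"
    and step: "\<And>Z. ideal Z \<Longrightarrow> J \<subseteq> Z \<Longrightarrow> Z \<noteq> UNIV \<Longrightarrow> \<exists>Z'. ideal Z' \<and> Z \<subseteq> Z' \<and> dim Z' = dim Z + 1"
  shows "chain_from J"
proof -
  have "\<forall>Z. ideal Z \<and> J \<subseteq> Z \<and> dim (UNIV::'b set) - dim Z = n \<longrightarrow> chain_from Z" for n
  proof (induction n)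
    case 0
    show ?case
    proof (intro allI impI)
      fix Z assume Z: "ideal Z \<and> J \<subseteq> Z \<and> dim (UNIV::'b set) - dim Z = 0"
      then have "Z = UNIV" using sub_eq_dim[of Z UNIV] ideal_sub by auto
      then show "chain_from Z" unfolding chain_from_def
        by (intro exI[of _ 0] exI[of _ "\<lambda>_. Z"]) (auto simp: ideal_UNIV)
    qed
  next
    case (Suc n)
    show ?case
    proof (intro allI impI)
      fix Z assume Z: "ideal Z \<and> J \<subseteq> Z \<and> dim (UNIV::'b set) - dim Z = Suc n"
      then have "Z \<noteq> UNIV" by auto
      then obtain Z' where Z': "ideal Z'" "Z \<subseteq> Z'" "dim Z' = dim Z + 1" using step Z by blast
      then have "dim (UNIV::'b set) - dim Z' = n" using Z by linarith
      then have "chain_from Z'" using Suc Z Z' by blast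
      then obtain m Hs where H: "Hs 0 = Z'" "Hs m = UNIV" "\<forall>j\<le>m. ideal (Hs j)"
        "\<forall>j<m. Hs j \<subseteq> Hs (Suc j) \<and> dim (Hs (Suc j)) = dim (Hs j) + 1"
        unfolding chain_from_def by blast
      define Hs' where "Hs' j = (if j = 0 then Z else Hs (j - 1))" for j
      have "Hs' 0 = Z" "Hs' (Suc m) = UNIV" using H unfolding Hs'_def by auto
      moreover have "\<forall>j\<le>Suc m. ideal (Hs' j)"
        using H(3) Z unfolding Hs'_def by (auto simp: le_diff_conv)
      moreover have "\<forall>j<Suc m. Hs' j \<subseteq> Hs' (Suc j) \<and> dim (Hs' (Suc j)) = dim (Hs' j) + 1"
      proof (intro allI impI)
        fix j assume "j < Suc m"
        then show "Hs' j \<subseteq> Hs' (Suc j) \<and> dim (Hs' (Suc j)) = dim (Hs' j) + 1"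
          using H(1,4) Z' unfolding Hs'_def by (cases j) auto
      qed
      ultimately show "chain_from Z" unfolding chain_from_def by blast
    qed
  qed
  then show ?thesis using J by blast
qed

lemma scalar_action:
  assumes Hs: "subspace A" "ideal B" "A \<subseteq> B" "B = span (insert v A)" "ideal A"
  shows "\<exists>c. \<forall>w\<in>B. br a w - scale c w \<in> A"
proof -
  have sA: "span A = A" using Hs(1) by simp
  have "br a v \<in> B" using ideal_br[OF Hs(2)] Hs(4) span_base by (metis insertI1)
  then obtain c where c: "br a v - scale c v \<in> A" using Hs(4) span_breakdown_eq[of "br a v" v A] sA by auto
  have "br a w - scale c w \<in> A" if w: "w \<in> B" for w
  proof -
    obtain t where t: "w - scale t v \<in> A" using w Hs(4) span_breakdown_eq[of w v A] sA by auto
    define u where "u = w - scale t v"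
    have "br a w - scale c w = (br a u - scale c u) + scale t (br a v - scale c v)"
      unfolding u_def by (simp add: br_diffR br_scaleR scale_right_diff_distrib algebra_simps)
    moreover have "br a u - scale c u \<in> A" using t u_def ideal_br[OF Hs(5)] Hs(1)
      by (meson subspace_diff subspace_scale)
    ultimately show ?thesis using c Hs(1) by (metis subspace_add subspace_scale)
  qed
  then show ?thesis by blast
qed

lemma comm_action:
  assumes Hs: "subspace A" "ideal B" "A \<subseteq> B" "B = span (insert v A)" "ideal A" and w: "w \<in> B"
  shows "br (br a b) w \<in> A"
proof -
  obtain ca where ca: "\<forall>w\<in>B. br a w - scale ca w \<in> A" using scalar_action[OF Hs] by blast
  obtain cb where cb: "\<forall>w\<in>B. br b w - scale cb w \<in> A" using scalar_action[OF Hs] by blast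
  define r1 where "r1 = br b w - scale cb w"
  define r2 where "r2 = br a w - scale ca w"
  have r: "r1 \<in> A" "r2 \<in> A" using ca cb w r1_def r2_def by auto
  have aw: "br a w = r2 + scale ca w" and bw: "br b w = r1 + scale cb w" unfolding r1_def r2_def by simp_all
  have "br (br a b) w = br a (br b w) - br b (br a w)" using jac[of a b w] by simp
  also have "\<dots> = br a r1 + scale cb (br a w) - (br b r2 + scale ca (br b w))"
    by (simp only: bw aw br_addR br_scaleR)
  also have "\<dots> = br a r1 + scale cb r2 - br b r2 - scale ca r1"
    by (simp add: aw bw scale_right_distrib algebra_simps)
  finally have e: "br (br a b) w = br a r1 + scale cb r2 - br b r2 - scale ca r1" .
  show ?thesis unfolding e using r ideal_br[OF Hs(5)] Hs(1)
    by (meson subspace_add subspace_diff subspace_scale)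
qed

end



context lie_fd begin

lemma adm0: "adm x 0 = br x" by (rule ext) (simp add: adm_def)

lemma chief:
  assumes hyp: "\<And>M C. maxs M \<Longrightarrow> ic M C \<Longrightarrow> dim C - dim (kc C) = 1"
  shows "ideal K \<Longrightarrow> ideal H \<Longrightarrow> K \<subset> H \<Longrightarrow> (\<forall>Z. ideal Z \<and> K \<subseteq> Z \<and> Z \<subseteq> H \<longrightarrow> Z = K \<or> Z = H)
     \<Longrightarrow> dim H = dim K + 1"
proof (induction "dim (UNIV::'b set) - dim K" arbitrary: K H rule: less_induct)
  case less
  note iK = less.prems(1) and iH = less.prems(2) and KH = less.prems(3) and ch = less.prems(4)
  have sK: "subspace K" and sH: "subspace H" using iK iH ideal_sub by auto
  have dKH: "dim K < dim H" using dim_lt[OF sK sH KH] .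
  have "chain_from H"
  proof (rule chain_exists[OF iH])
    fix Z assume Z: "ideal Z" "H \<subseteq> Z" "Z \<noteq> UNIV"
    obtain Z' where Z': "ideal Z'" "Z \<subset> Z'" "\<forall>Y. ideal Y \<and> Z \<subseteq> Y \<and> Y \<subseteq> Z' \<longrightarrow> Y = Z \<or> Y = Z'"
      using min_above[OF Z(1,3)] by blast
    have "dim H \<le> dim Z" using dim_le Z(2) by blast
    moreover have "dim Z \<le> dim (UNIV::'b set)" using dim_le by blast
    ultimately have "dim (UNIV::'b set) - dim Z < dim (UNIV::'b set) - dim K" using dKH by linarith
    then have "dim Z' = dim Z + 1" using less.hyps Z(1) Z'(1,2,3) by blast
    then show "\<exists>Z'. ideal Z' \<and> Z \<subseteq> Z' \<and> dim Z' = dim Z + 1" using Z' by blast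
  qed
  then obtain m Hs where ch0: "Hs 0 = H" and chm: "Hs m = UNIV" and chi: "\<forall>j\<le>m. ideal (Hs j)"
    and chs: "\<forall>j<m. Hs j \<subseteq> Hs (Suc j) \<and> dim (Hs (Suc j)) = dim (Hs j) + 1"
    unfolding chain_from_def by blast
  show ?case
  proof (cases "\<exists>M. maxs M \<and> K \<subseteq> M \<and> \<not> H \<subseteq> M")
    case True
    then obtain M where M: "maxs M" "K \<subseteq> M" "\<not> H \<subseteq> M" by blast
    show ?thesis by (rule F1[OF M(1) hyp[OF M(1)] iK M(2) iH _ M(3)]) (use KH ch in auto)
  next
    case False
    then have frat: "\<And>M. maxs M \<Longrightarrow> K \<subseteq> M \<Longrightarrow> H \<subseteq> M" by blast
    have Frat: "S = UNIV" if S: "subalg S" "K \<subseteq> S" "ssum S H = UNIV" for S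
    proof (rule ccontr)
      assume "S \<noteq> UNIV"
      then obtain M where M: "maxs M" "S \<subseteq> M" using max_exists[OF S(1)] by blast
      then have "H \<subseteq> M" using frat S(2) by blast
      then have "ssum S H \<subseteq> M" using ssum_least[OF M(2) _ maxs_sub[OF M(1)]] by blast
      then show False using S(3) maxs_ne[OF M(1)] by blast
    qed
    define B where "B = span {z. \<exists>a b. z = br a b}"
    define D where "D = ssum B K"
    have sB: "subspace B" unfolding B_def by simp
    have brB: "br a b \<in> B" for a b unfolding B_def by (rule span_base) blast
    have BD: "B \<subseteq> D" unfolding D_def by (rule ssum_sup1[OF sK])
    have KD: "K \<subseteq> D" unfolding D_def by (rule ssum_sup2[OF sB])
    have sD: "subspace D" unfolding D_def by (rule subspace_ssum[OF sB sK])
    have brD: "br a b \<in> D" for a b using brB BD by blast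
    have saD: "subalg D" unfolding lie_subalgebra_def using sD brD by blast
    have mono: "j \<le> m \<Longrightarrow> H \<subseteq> Hs j" for j
    proof (induction j)
      case 0 then show ?case using ch0 by simp
    next
      case (Suc j)
      then have "j < m" by simp
      then have "Hs j \<subseteq> Hs (Suc j)" using chs by blast
      moreover have "H \<subseteq> Hs j" using Suc.IH \<open>j < m\<close> by simp
      ultimately show ?case by blast
    qed
    have step: "br x v \<in> Hs j" if j: "j < m" and x: "x \<in> D" and v: "v \<in> Hs (Suc j)" for x v j
    proof -
      have sj: "subspace (Hs j)" and ij: "ideal (Hs j)" and ij1: "ideal (Hs (Suc j))"
        using chi j ideal_sub by auto
      obtain v0 where v0: "Hs (Suc j) = span (insert v0 (Hs j))"
        using step_span[OF sj ideal_sub[OF ij1]] chs j by blast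
      have inc: "Hs j \<subseteq> Hs (Suc j)" using chs j by blast
      have "subspace {y. br y v \<in> Hs j}" using sj
        by (auto simp: subspace_def br_addL br_scaleL)
      moreover have "br (br a b) v \<in> Hs j" for a b
        by (rule comm_action[OF sj ij1 inc v0 ij v])
      ultimately have Bv: "y \<in> B \<Longrightarrow> br y v \<in> Hs j" for y
        unfolding B_def using span_induct[of y "{z. \<exists>a b. z = br a b}" "\<lambda>y. br y v \<in> Hs j"] by blast
      obtain y k where yk: "y \<in> B" "k \<in> K" "x = y + k" using x unfolding D_def by (auto elim!: ssum_E)
      have "br k v \<in> K" using ideal_brL[OF iK yk(2)] .
      then have "br k v \<in> Hs j" using mono[of j] j KH by auto
      then show ?thesis using Bv[OF yk(1)] yk(3) br_addL sj by (metis subspace_add)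
    qed
    have nil: "(adm x 0 ^^ m) v \<in> H" if x: "x \<in> D" for x v
    proof -
      have "j \<le> m \<Longrightarrow> \<forall>v\<in>Hs j. (adm x 0 ^^ j) v \<in> H" for j
      proof (induction j)
        case 0 then show ?case using ch0 by simp
      next
        case (Suc j)
        show ?case
        proof
          fix v assume "v \<in> Hs (Suc j)"
          then have "adm x 0 v \<in> Hs j" using step[of j x v] Suc.prems x adm0 by simp
          then have "(adm x 0 ^^ j) (adm x 0 v) \<in> H" using Suc by simp
          then show "(adm x 0 ^^ Suc j) v \<in> H" by (simp add: pow_swap)
        qed
      qed
      then show ?thesis using chm by blast
    qed
    have nilK: "\<exists>n. (br x ^^ n) v \<in> K" if x: "x \<in> D" for x v
    proof -
      have W0: "subalg (Wc x K 0) \<and> K \<subseteq> Wc x K 0 \<and> ssum (Wc x K 0) H = UNIV"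
        by (rule W0_split[OF iK iH _ nil[OF x]]) (use KH in blast)
      then have "Wc x K 0 = UNIV" using Frat by blast
      then have "v \<in> Wc x K 0" by simp
      then show ?thesis unfolding Wc_def adm0 by simp
    qed
    obtain h1 where h1: "h1 \<in> H" "h1 \<notin> K" "\<forall>s\<in>D. br s h1 \<in> K"
    proof -
      have "\<exists>v\<in>H. v \<notin> K \<and> (\<forall>s\<in>D. br s v \<in> K)"
        by (rule engel[OF iK saD KD]) (use nilK sH sK KH ideal_br[OF iH] ideal_br[OF iK] in auto)
      then show ?thesis using that by blast
    qed
    define H' where "H' = {h \<in> H. \<forall>s\<in>D. br s h \<in> K}"
    have iH': "ideal H'" unfolding lie_ideal_def
    proof (intro conjI allI ballI)
      show "subspace H'" unfolding H'_def subspace_def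
        using sH sK by (auto simp: subspace_def br_addR br_scaleR)
      fix y h assume h: "h \<in> H'"
      have "br y h \<in> H" using h ideal_br[OF iH] H'_def by blast
      moreover have "br s (br y h) \<in> K" if s: "s \<in> D" for s
      proof -
        have "br (br s y) h \<in> K" using h brD H'_def by blast
        moreover have "br y (br s h) \<in> K" using h s ideal_br[OF iK] H'_def by blast
        ultimately show ?thesis unfolding jac[of s y h] by (rule subspace_add[OF sK])
      qed
      ultimately show "br y h \<in> H'" unfolding H'_def by blast
    qed
    have "K \<subseteq> H'" unfolding H'_def using KH ideal_br[OF iK] by blast
    moreover have "H' \<subseteq> H" unfolding H'_def by blast
    moreover have "H' \<noteq> K" using h1 H'_def by blast
    ultimately have "H' = H" using ch iH' by blast
    then have S2: "br (br a b) h \<in> K" if "h \<in> H" for a b h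
      using that brD H'_def by blast
    have S3: "\<exists>c. \<exists>h\<in>H. h \<notin> K \<and> adm x c h \<in> K" for x
    proof (rule ccontr)
      assume "\<not> ?thesis"
      then have noeig: "\<And>c h. h \<in> H \<Longrightarrow> adm x c h \<in> K \<Longrightarrow> h \<in> K" by blast
      have W: "subalg (span (\<Union>c. Wc x K c)) \<and> K \<subseteq> span (\<Union>c. Wc x K c) \<and>
         ssum (span (\<Union>c. Wc x K c)) H = UNIV \<and> span (\<Union>c. Wc x K c) \<inter> H \<subseteq> K"
        by (rule W_split[OF iK iH _ ch0 chm chi chs noeig]) (use KH in blast)
      then have "span (\<Union>c. Wc x K c) = UNIV" using Frat by blast
      then have "H \<subseteq> K" using W by blast
      then show False using KH by blast
    qed
    have S4: "\<exists>c. \<forall>h\<in>H. br x h - scale c h \<in> K" for x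
    proof -
      obtain c h0 where h0: "h0 \<in> H" "h0 \<notin> K" "adm x c h0 \<in> K" using S3[of x] by blast
      define E where "E = {h \<in> H. adm x c h \<in> K}"
      have iE: "ideal E" unfolding lie_ideal_def
      proof (intro conjI allI ballI)
        show "subspace E" unfolding E_def subspace_def
          using sH sK lin_adm[of x c] lin_0[OF lin_adm]
          by (auto simp: subspace_def lin_add lin_scale)
        fix y h assume h: "h \<in> E"
        have "br y h \<in> H" using h ideal_br[OF iH] E_def by blast
        moreover have "adm x c (br y h) = br (br x y) h + br y (adm x c h)"
          unfolding adm_def by (simp add: jac[of x y h] br_diffR br_scaleR algebra_simps)
        moreover have "br (br x y) h \<in> K" using S2 h E_def by blast
        moreover have "br y (adm x c h) \<in> K" using h ideal_br[OF iK] E_def by blast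
        ultimately show "br y h \<in> E" unfolding E_def using subspace_add[OF sK] by simp
      qed
      have "K \<subseteq> E" unfolding E_def using KH adm_K[OF iK] by blast
      moreover have "E \<subseteq> H" unfolding E_def by blast
      moreover have "E \<noteq> K" using h0 E_def by blast
      ultimately have "E = H" using ch iE by blast
      then show ?thesis unfolding E_def adm_def by blast
    qed
    obtain h0 where h0: "h0 \<in> H" "h0 \<notin> K" using KH by blast
    define G where "G = span (insert h0 K)"
    have sG: "subspace G" unfolding G_def by simp
    have spK: "span K = K" using sK by simp
    have iG: "ideal G" unfolding lie_ideal_def
    proof (intro conjI allI ballI)
      show "subspace G" by (rule sG)
      fix y g assume g: "g \<in> G"
      obtain t where t: "g - scale t h0 \<in> K" using g span_breakdown_eq[of g h0 K] spK unfolding G_def by auto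
      obtain c where c: "\<forall>h\<in>H. br y h - scale c h \<in> K" using S4 by blast
      have "br y g = br y (g - scale t h0) + scale t (br y h0 - scale c h0) + scale (t * c) h0"
        by (simp add: br_diffR br_scaleR scale_right_diff_distrib algebra_simps)
      moreover have "br y (g - scale t h0) \<in> G" using ideal_br[OF iK t] span_superset unfolding G_def by blast
      moreover have "scale t (br y h0 - scale c h0) \<in> G"
        using c h0(1) subspace_scale[OF sK] span_superset unfolding G_def by blast
      moreover have "scale (t * c) h0 \<in> G" unfolding G_def by (simp add: span_base span_scale)
      ultimately show "br y g \<in> G" using sG by (metis subspace_add)
    qed
    have "K \<subseteq> G" unfolding G_def using span_superset by blast
    moreover have "G \<subseteq> H" unfolding G_def using h0(1) KH sH by (simp add: span_minimal)
    moreover have "G \<noteq> K" using h0 span_base[of h0 "insert h0 K"] unfolding G_def by blast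
    ultimately have "G = H" using ch iG by blast
    moreover have "dim G = dim K + 1" unfolding G_def using fd.dim_insert[of h0 K] spK h0(2) by simp
    ultimately show ?thesis by simp
  qed
qed

theorem main:
  "supersolvable scale br \<longleftrightarrow> (\<forall>M. maxs M \<longrightarrow> ideal_index scale br M = 1)"
proof
  assume ss: "supersolvable scale br"
  show "\<forall>M. maxs M \<longrightarrow> ideal_index scale br M = 1"
  proof (intro allI impI)
    fix M assume M: "maxs M"
    obtain C where C: "ic M C" using ic_exists[OF M] by blast
    show "ideal_index scale br M = 1" using index_eq[OF M C] fwd[OF ss M C] by simp
  qed
next
  assume idx: "\<forall>M. maxs M \<longrightarrow> ideal_index scale br M = 1"
  have hyp: "dim C - dim (kc C) = 1" if "maxs M" "ic M C" for M C
    using index_eq[OF that] idx that(1) by simp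
  have "chain_from {0}"
  proof (rule chain_exists[OF ideal_0])
    fix Z assume Z: "ideal Z" "{0} \<subseteq> Z" "Z \<noteq> UNIV"
    obtain Z' where Z': "ideal Z'" "Z \<subset> Z'" "\<forall>Y. ideal Y \<and> Z \<subseteq> Y \<and> Y \<subseteq> Z' \<longrightarrow> Y = Z \<or> Y = Z'"
      using min_above[OF Z(1,3)] by blast
    have "dim Z' = dim Z + 1" by (rule chief[OF hyp Z(1) Z'(1) Z'(2) Z'(3)])
    then show "\<exists>Z'. ideal Z' \<and> Z \<subseteq> Z' \<and> dim Z' = dim Z + 1" using Z' by blast
  qed
  then show "supersolvable scale br" unfolding chain_from_def supersolvable_def by blast
qed

end


theorem corollary2p8:
  fixes scale :: "'a::field \<Rightarrow> 'b::ab_group_add \<Rightarrow> 'b"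
    and br :: "'b \<Rightarrow> 'b \<Rightarrow> 'b"
  assumes "lie_algebra scale br" and "fin_dim scale"
  shows "supersolvable scale br \<longleftrightarrow>
           (\<forall>M. maximal_subalgebra scale br M \<longrightarrow> ideal_index scale br M = 1)"
proof -
  interpret lie_fd scale br using assms by unfold_locales
  show ?thesis by (rule main)
qed

end
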